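(* Let $G$ be a profinite group such that $H^*(G)$ is $2$-quadratic. Then the kernel of the inflation map $\inf_G\colon H^2(G^{[2]})_{\mathrm{dec}}\to H^2(G)$ is generated by those elements of the form $\psi\cup\psi'$ with $\psi,\psi'\in H^1(G^{[2]})$ which lie in this kernel.
   Context: $p$ is a prime, $q=p^s$ ($s\ge1$); $H^i(G)=H^i(G,\mathbb{Z}/q)$ is continuous cohomology with trivial action, with cup product. $G^{(2)}=G^q[G,G]$ and $G^{[2]}=G/G^{(2)}$. $H^2(G)_{\mathrm{dec}}$ is the image of the cup product $H^1(G)\otimes H^1(G)\to H^2(G)$. $H^*(G)$ is called $2$-quadratic if the kernel of the cup product map $H^1(G)\otimes_{\mathbb{Z}/q}H^1(G)\to H^2(G)$ equals the subgroup $C_2$ generated by all $\psi_1\otimes\psi_2$ with $\psi_1\cup\psi_2=0$ (i.e., the induced map $H^1(G)^{\otimes 2}/C_2\to H^2(G)_{\mathrm{dec}}$ is an isomorphism). *)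

theory Defs
  imports "HOL-Analysis.Analysis" "HOL-Algebra.Coset" "HOL-Algebra.Generated_Groups"
    "HOL-Algebra.FiniteProduct"
begin

definition topological_group :: "('a, 'b) monoid_scheme \<Rightarrow> 'a topology \<Rightarrow> bool" where
  "topological_group G T \<longleftrightarrow> group G \<and> topspace T = carrier G
     \<and> continuous_map (prod_topology T T) T (\<lambda>(x, y). x \<otimes>\<^bsub>G\<^esub> y)
     \<and> continuous_map T T (\<lambda>x. inv\<^bsub>G\<^esub> x)"

definition profinite_group :: "('a, 'b) monoid_scheme \<Rightarrow> 'a topology \<Rightarrow> bool" where
  "profinite_group G T \<longleftrightarrow> topological_group G T \<and> compact_space T \<and> Hausdorff_space T
     \<and> (\<forall>x\<in>topspace T. connected_component_of_set T x = {x})"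

section \<open>Coefficients Z/q (represented by 0..q-1, discrete topology)\<close>

definition Zq :: "nat \<Rightarrow> int set" where "Zq q = {0..<int q}"
definition ZqT :: "nat \<Rightarrow> int topology" where "ZqT q = discrete_topology (Zq q)"

text \<open>H^1 = continuous homomorphisms G -> Z/q (B^1 = 0 for the trivial action).\<close>
definition H1 :: "('a, 'b) monoid_scheme \<Rightarrow> 'a topology \<Rightarrow> nat \<Rightarrow> ('a \<Rightarrow> int) set" where
  "H1 G T q = {\<psi>. continuous_map T (ZqT q) \<psi> \<and> (\<forall>x. x \<notin> carrier G \<longrightarrow> \<psi> x = 0)
     \<and> (\<forall>g\<in>carrier G. \<forall>h\<in>carrier G. \<psi> (g \<otimes>\<^bsub>G\<^esub> h) = (\<psi> g + \<psi> h) mod int q)}"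

definition C1 :: "('a, 'b) monoid_scheme \<Rightarrow> 'a topology \<Rightarrow> nat \<Rightarrow> ('a \<Rightarrow> int) set" where
  "C1 G T q = {c. continuous_map T (ZqT q) c \<and> (\<forall>x. x \<notin> carrier G \<longrightarrow> c x = 0)}"

definition Z2 :: "('a, 'b) monoid_scheme \<Rightarrow> 'a topology \<Rightarrow> nat \<Rightarrow> ('a \<times> 'a \<Rightarrow> int) set" where
  "Z2 G T q = {f. continuous_map (prod_topology T T) (ZqT q) f
     \<and> (\<forall>x. x \<notin> carrier G \<times> carrier G \<longrightarrow> f x = 0)
     \<and> (\<forall>g\<in>carrier G. \<forall>h\<in>carrier G. \<forall>k\<in>carrier G.
          (f (h, k) - f (g \<otimes>\<^bsub>G\<^esub> h, k) + f (g, h \<otimes>\<^bsub>G\<^esub> k) - f (g, h)) mod int q = 0)}"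

definition cohom2 :: "('a, 'b) monoid_scheme \<Rightarrow> 'a topology \<Rightarrow> nat
    \<Rightarrow> ('a \<times> 'a \<Rightarrow> int) \<Rightarrow> ('a \<times> 'a \<Rightarrow> int) \<Rightarrow> bool" where
  "cohom2 G T q f f' \<longleftrightarrow> (\<exists>c\<in>C1 G T q. \<forall>g\<in>carrier G. \<forall>h\<in>carrier G.
     (f (g, h) - f' (g, h)) mod int q = (c h - c (g \<otimes>\<^bsub>G\<^esub> h) + c g) mod int q)"

definition cls2 :: "('a, 'b) monoid_scheme \<Rightarrow> 'a topology \<Rightarrow> nat
    \<Rightarrow> ('a \<times> 'a \<Rightarrow> int) \<Rightarrow> ('a \<times> 'a \<Rightarrow> int) set" where
  "cls2 G T q f = {f' \<in> Z2 G T q. cohom2 G T q f f'}"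

text \<open>The group H^2(G) = Z^2/B^2, elements are cohomology classes (sets of cocycles).\<close>
definition H2 :: "('a, 'b) monoid_scheme \<Rightarrow> 'a topology \<Rightarrow> nat
    \<Rightarrow> ('a \<times> 'a \<Rightarrow> int) set monoid" where
  "H2 G T q = \<lparr> carrier = cls2 G T q ` Z2 G T q,
     mult = (\<lambda>A B. cls2 G T q (\<lambda>x. ((SOME f. f \<in> A) x + (SOME f. f \<in> B) x) mod int q)),
     one = cls2 G T q (\<lambda>x. 0) \<rparr>"

definition cup :: "('a, 'b) monoid_scheme \<Rightarrow> 'a topology \<Rightarrow> nat
    \<Rightarrow> ('a \<Rightarrow> int) \<Rightarrow> ('a \<Rightarrow> int) \<Rightarrow> ('a \<times> 'a \<Rightarrow> int) set" where
  "cup G T q \<psi> \<psi>' = cls2 G T q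
     (\<lambda>(g, h). if g \<in> carrier G \<and> h \<in> carrier G then (\<psi> g * \<psi>' h) mod int q else 0)"

definition H2dec :: "('a, 'b) monoid_scheme \<Rightarrow> 'a topology \<Rightarrow> nat
    \<Rightarrow> ('a \<times> 'a \<Rightarrow> int) set monoid" where
  "H2dec G T q = (H2 G T q)\<lparr> carrier := generate (H2 G T q)
     {c. \<exists>\<psi>\<in>H1 G T q. \<exists>\<psi>'\<in>H1 G T q. c = cup G T q \<psi> \<psi>'} \<rparr>"

text \<open>The tensor product H^1 \<otimes> H^1 is realised as finitely supported formal integer
  combinations of pairs (the free abelian group on H^1 \<times> H^1) modulo the subgroup generated
  by the bilinearity relations.  (As H^1 has exponent q, this is the same as the tensor
  product over Z/q.)\<close>

inductive_set zspan :: "('x \<Rightarrow> int) set \<Rightarrow> ('x \<Rightarrow> int) set" for S where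
  zero: "(\<lambda>_. 0) \<in> zspan S"
| gen: "s \<in> S \<Longrightarrow> s \<in> zspan S"
| neg: "a \<in> zspan S \<Longrightarrow> (\<lambda>x. - a x) \<in> zspan S"
| add: "a \<in> zspan S \<Longrightarrow> b \<in> zspan S \<Longrightarrow> (\<lambda>x. a x + b x) \<in> zspan S"

definition delta :: "'x \<Rightarrow> 'x \<Rightarrow> int" where
  "delta z = (\<lambda>y. if y = z then 1 else 0)"

definition add1 :: "nat \<Rightarrow> ('a \<Rightarrow> int) \<Rightarrow> ('a \<Rightarrow> int) \<Rightarrow> ('a \<Rightarrow> int)" where
  "add1 q \<psi> \<phi> = (\<lambda>x. (\<psi> x + \<phi> x) mod int q)"

definition bilin_rels :: "('a, 'b) monoid_scheme \<Rightarrow> 'a topology \<Rightarrow> nat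
    \<Rightarrow> (('a \<Rightarrow> int) \<times> ('a \<Rightarrow> int) \<Rightarrow> int) set" where
  "bilin_rels G T q =
     {(\<lambda>z. delta (add1 q a a', b) z - delta (a, b) z - delta (a', b) z)
        | a a' b. a \<in> H1 G T q \<and> a' \<in> H1 G T q \<and> b \<in> H1 G T q}
   \<union> {(\<lambda>z. delta (a, add1 q b b') z - delta (a, b) z - delta (a, b') z)
        | a b b'. a \<in> H1 G T q \<and> b \<in> H1 G T q \<and> b' \<in> H1 G T q}"

definition C2_gens :: "('a, 'b) monoid_scheme \<Rightarrow> 'a topology \<Rightarrow> nat
    \<Rightarrow> (('a \<Rightarrow> int) \<times> ('a \<Rightarrow> int) \<Rightarrow> int) set" where
  "C2_gens G T q = {delta (a, b) | a b. a \<in> H1 G T q \<and> b \<in> H1 G T q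
      \<and> cup G T q a b = \<one>\<^bsub>H2 G T q\<^esub>}"

definition cup_formal :: "('a, 'b) monoid_scheme \<Rightarrow> 'a topology \<Rightarrow> nat
    \<Rightarrow> (('a \<Rightarrow> int) \<times> ('a \<Rightarrow> int) \<Rightarrow> int) \<Rightarrow> ('a \<times> 'a \<Rightarrow> int) set" where
  "cup_formal G T q F = finprod (H2 G T q)
     (\<lambda>(a, b). (cup G T q a b) [^]\<^bsub>H2 G T q\<^esub> (F (a, b))) {z. F z \<noteq> 0}"

text \<open>H^*(G) is 2-quadratic: kernel of H^1 \<otimes> H^1 -> H^2 equals C_2
  (the inclusion C_2 \<subseteq> kernel being automatic).\<close>
definition two_quadratic :: "('a, 'b) monoid_scheme \<Rightarrow> 'a topology \<Rightarrow> nat \<Rightarrow> bool" where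
  "two_quadratic G T q \<longleftrightarrow>
     (\<forall>F. finite {z. F z \<noteq> 0} \<and> {z. F z \<noteq> 0} \<subseteq> H1 G T q \<times> H1 G T q
        \<and> cup_formal G T q F = \<one>\<^bsub>H2 G T q\<^esub>
        \<longrightarrow> F \<in> zspan (bilin_rels G T q \<union> C2_gens G T q))"

definition Gsub2 :: "('a, 'b) monoid_scheme \<Rightarrow> 'a topology \<Rightarrow> nat \<Rightarrow> 'a set" where
  "Gsub2 G T q = T closure_of generate G
     ({x [^]\<^bsub>G\<^esub> q | x. x \<in> carrier G}
      \<union> {x \<otimes>\<^bsub>G\<^esub> y \<otimes>\<^bsub>G\<^esub> inv\<^bsub>G\<^esub> x \<otimes>\<^bsub>G\<^esub> inv\<^bsub>G\<^esub> y | x y. x \<in> carrier G \<and> y \<in> carrier G})"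

definition Gquot2 :: "('a, 'b) monoid_scheme \<Rightarrow> 'a topology \<Rightarrow> nat \<Rightarrow> 'a set monoid" where
  "Gquot2 G T q = G Mod (Gsub2 G T q)"

definition Tquot2 :: "('a, 'b) monoid_scheme \<Rightarrow> 'a topology \<Rightarrow> nat \<Rightarrow> 'a set topology" where
  "Tquot2 G T q = topology (\<lambda>U. U \<subseteq> carrier (Gquot2 G T q) \<and> openin T (\<Union>U))"

definition infl2 :: "('a, 'b) monoid_scheme \<Rightarrow> 'a topology \<Rightarrow> nat
    \<Rightarrow> ('a set \<times> 'a set \<Rightarrow> int) set \<Rightarrow> ('a \<times> 'a \<Rightarrow> int) set" where
  "infl2 G T q A = cls2 G T q (\<lambda>(g, h). if g \<in> carrier G \<and> h \<in> carrier G
      then (SOME f. f \<in> A) (Gsub2 G T q #>\<^bsub>G\<^esub> g, Gsub2 G T q #>\<^bsub>G\<^esub> h) else 0)"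

end

theory Submission
  imports Defs
begin

lemma modeq_dvd: "(a mod int q = b mod int q) \<longleftrightarrow> int q dvd (a - b)"
  by (simp add: mod_eq_dvd_iff)

lemma dvd_mod_self: "int q dvd (a mod int q - a)"
  using mod_eq_dvd_iff[of "a mod int q" "int q" a] by simp

lemma dvd_eqI: "(k::int) dvd y \<Longrightarrow> x = y \<Longrightarrow> k dvd x"
  by simp

lemma dvd_neg: "(k::int) dvd y \<Longrightarrow> k dvd - y"
  by simp

lemma eq_sym: "(b::int) - a - (d1 - d2 + d3) = - (a - b - (c1 - c2 + c3)) - (d1 + c1) + (d2 + c2) - (d3 + c3)"
  by (simp add: algebra_simps)
lemma eq_trans: "(a::int) - e - (s1 - s2 + s3) = (a - b - (c1 - c2 + c3)) + (b - e - (d1 - d2 + d3)) - (s1 - c1 - d1) + (s2 - c2 - d2) - (s3 - c3 - d3)"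
  by (simp add: algebra_simps)
lemma eq_add: "(S::int) - S' - (s1 - s2 + s3) = (a - a' - (c1 - c2 + c3)) + (b - b' - (d1 - d2 + d3)) + (S - a - b) - (S' - a' - b') - (s1 - c1 - d1) + (s2 - c2 - d2) - (s3 - c3 - d3)"
  by (simp add: algebra_simps)
lemma eq_Z2add: "(s1::int) - s2 + s3 - s4 = (f1 - f2 + f3 - f4) + (g1 - g2 + g3 - g4) + (s1 - f1 - g1) - (s2 - f2 - g2) + (s3 - f3 - g3) - (s4 - f4 - g4)"
  by (simp add: algebra_simps)
lemma eq_Z2neg: "(s1::int) - s2 + s3 - s4 = - (f1 - f2 + f3 - f4) + (s1 + f1) - (s2 + f2) + (s3 + f3) - (s4 + f4)"
  by (simp add: algebra_simps)
lemma eq_cup: "(m1::int) - m2 + m3 - m4 = (m1 - a2*b3) - (m2 - a12*b3) + (m3 - a1*b23) - (m4 - a1*b2) + (- ((a12 - a1 - a2) * b3) + a1 * (b23 - b2 - b3))"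
  by (simp add: algebra_simps)

lemma mod_in_Zq: "q > 0 \<Longrightarrow> a mod int q \<in> Zq q"
  by (simp add: Zq_def)

lemma Zq_mod: "x \<in> Zq q \<Longrightarrow> x mod int q = x"
  by (simp add: Zq_def)

lemma cont_Zq_iff:
  "continuous_map X (ZqT q) f \<longleftrightarrow>
     (\<forall>x\<in>topspace X. f x \<in> Zq q) \<and> (\<forall>y. openin X {x\<in>topspace X. f x = y})"
proof
  assume c: "continuous_map X (ZqT q) f"
  have 1: "\<forall>x\<in>topspace X. f x \<in> Zq q"
    using c by (auto simp: continuous_map ZqT_def)
  moreover have "openin X {x\<in>topspace X. f x = y}" for y
  proof (cases "y \<in> Zq q")
    case True
    have "openin X {x\<in>topspace X. f x \<in> {y}}"
      using c True by (auto simp: continuous_map ZqT_def)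
    then show ?thesis by simp
  next
    case False
    have e: "{x\<in>topspace X. f x = y} = {}" using 1 False by auto
    show ?thesis unfolding e by simp
  qed
  ultimately show "(\<forall>x\<in>topspace X. f x \<in> Zq q) \<and> (\<forall>y. openin X {x\<in>topspace X. f x = y})"
    by blast
next
  assume a: "(\<forall>x\<in>topspace X. f x \<in> Zq q) \<and> (\<forall>y. openin X {x\<in>topspace X. f x = y})"
  show "continuous_map X (ZqT q) f"
    unfolding continuous_map
  proof (intro conjI allI impI)
    show "f ` topspace X \<subseteq> topspace (ZqT q)" using a by (auto simp: ZqT_def)
    fix U assume "openin (ZqT q) U"
    have "{x \<in> topspace X. f x \<in> U} = \<Union>((\<lambda>y. {x\<in>topspace X. f x = y}) ` U)" by auto
    also have "openin X \<dots>" using a by auto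
    finally show "openin X {x \<in> topspace X. f x \<in> U}" .
  qed
qed

lemma cont_Zq_comb:
  fixes \<phi> :: "int \<Rightarrow> int \<Rightarrow> int"
  assumes f: "continuous_map X (ZqT q) f" and g: "continuous_map X (ZqT q) g"
    and h1: "\<And>x. x \<in> topspace X \<Longrightarrow> h x \<in> Zq q"
    and h2: "\<And>x. x \<in> topspace X \<Longrightarrow> h x = \<phi> (f x) (g x)"
  shows "continuous_map X (ZqT q) h"
  unfolding cont_Zq_iff
proof (intro conjI ballI allI)
  fix y
  have "{x\<in>topspace X. h x = y} =
        \<Union>((\<lambda>(a,b). {x\<in>topspace X. f x = a} \<inter> {x\<in>topspace X. g x = b}) ` {(a,b). \<phi> a b = y})"
    using h2 by auto
  also have "openin X \<dots>"
    using f g unfolding cont_Zq_iff by (intro openin_Union) auto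
  finally show "openin X {x\<in>topspace X. h x = y}" .
qed (use h1 in auto)

lemma cont_Zq_comp1:
  fixes \<phi> :: "int \<Rightarrow> int"
  assumes f: "continuous_map X (ZqT q) f"
    and h1: "\<And>x. x \<in> topspace X \<Longrightarrow> h x \<in> Zq q"
    and h2: "\<And>x. x \<in> topspace X \<Longrightarrow> h x = \<phi> (f x)"
  shows "continuous_map X (ZqT q) h"
  using cont_Zq_comb[OF f f h1, where \<phi>="\<lambda>a b. \<phi> a"] h2 by auto

lemma cont_Zq_const: "q > 0 \<Longrightarrow> continuous_map X (ZqT q) (\<lambda>x. 0)"
  by (rule continuous_map_const[THEN iffD2]) (simp add: ZqT_def Zq_def)

section \<open>Degree-2 cohomology is a commutative group\<close>

definition add2 :: "nat \<Rightarrow> ('x \<Rightarrow> int) \<Rightarrow> ('x \<Rightarrow> int) \<Rightarrow> ('x \<Rightarrow> int)" where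
  "add2 q f g = (\<lambda>x. (f x + g x) mod int q)"

definition neg2 :: "nat \<Rightarrow> ('x \<Rightarrow> int) \<Rightarrow> ('x \<Rightarrow> int)" where
  "neg2 q f = (\<lambda>x. (- f x) mod int q)"

lemma cohom2_iff:
  "cohom2 G T q f f' \<longleftrightarrow> (\<exists>c\<in>C1 G T q. \<forall>g\<in>carrier G. \<forall>h\<in>carrier G.
     int q dvd (f (g, h) - f' (g, h) - (c h - c (g \<otimes>\<^bsub>G\<^esub> h) + c g)))"
  unfolding cohom2_def modeq_dvd by simp

lemma C1_zero: "q > 0 \<Longrightarrow> (\<lambda>_. 0) \<in> C1 G T q"
  by (simp add: C1_def cont_Zq_const del: continuous_map_const)

lemma C1_cont: "c \<in> C1 G T q \<Longrightarrow> continuous_map T (ZqT q) c"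
  by (simp add: C1_def)

lemma C1_add: "q > 0 \<Longrightarrow> c \<in> C1 G T q \<Longrightarrow> d \<in> C1 G T q \<Longrightarrow> add2 q c d \<in> C1 G T q"
  unfolding C1_def add2_def
  by (auto intro!: cont_Zq_comb[of T q c d _ "\<lambda>a b. (a + b) mod int q"] mod_in_Zq)

lemma C1_neg: "q > 0 \<Longrightarrow> c \<in> C1 G T q \<Longrightarrow> neg2 q c \<in> C1 G T q"
  unfolding C1_def neg2_def
  by (auto intro!: cont_Zq_comp1[of T q c _ "\<lambda>a. (- a) mod int q"] mod_in_Zq)

lemma cohom2_refl: assumes q: "q > 0" shows "cohom2 G T q f f"
  unfolding cohom2_iff by (rule bexI[OF _ C1_zero[OF q]]) simp

lemma cohom2_modq: assumes q: "q > 0" shows "cohom2 G T q f (\<lambda>x. f x mod int q)"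
  unfolding cohom2_iff
proof (rule bexI[OF _ C1_zero[OF q]], intro ballI)
  fix g h
  have "int q dvd - (f (g, h) mod int q - f (g, h))" by (rule dvd_neg[OF dvd_mod_self])
  then show "int q dvd f (g, h) - f (g, h) mod int q - (0 - 0 + 0)" by simp
qed

lemma cohom2_sym:
  assumes q: "q > 0" and "cohom2 G T q f f'" shows "cohom2 G T q f' f"
proof -
  from assms(2) obtain c where c: "c \<in> C1 G T q"
    and h: "\<And>g h. g\<in>carrier G \<Longrightarrow> h\<in>carrier G \<Longrightarrow>
       int q dvd (f (g, h) - f' (g, h) - (c h - c (g \<otimes>\<^bsub>G\<^esub> h) + c g))"
    unfolding cohom2_iff by blast
  show ?thesis unfolding cohom2_iff
  proof (intro bexI[OF _ C1_neg[OF q c]] ballI)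
    fix g h assume gh: "g\<in>carrier G" "h\<in>carrier G"
    let ?c = "neg2 q c"
    have d: "int q dvd (?c x + c x)" for x
      using dvd_mod_self[of q "- c x"] by (simp add: neg2_def)
    have "f' (g, h) - f (g, h) - (?c h - ?c (g \<otimes>\<^bsub>G\<^esub> h) + ?c g) =
       - (f (g, h) - f' (g, h) - (c h - c (g \<otimes>\<^bsub>G\<^esub> h) + c g))
       - (?c h + c h) + (?c (g \<otimes>\<^bsub>G\<^esub> h) + c (g \<otimes>\<^bsub>G\<^esub> h)) - (?c g + c g)"
      by (rule eq_sym)
    also have "int q dvd \<dots>"
      by (rule dvd_diff[OF dvd_add[OF dvd_diff[OF dvd_neg[OF h[OF gh]] d] d] d])
    finally show "int q dvd (f' (g, h) - f (g, h) - (?c h - ?c (g \<otimes>\<^bsub>G\<^esub> h) + ?c g))" .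
  qed
qed

lemma cohom2_trans:
  assumes q: "q > 0" and "cohom2 G T q f f'" "cohom2 G T q f' f''" shows "cohom2 G T q f f''"
proof -
  from assms(2) obtain c where c: "c \<in> C1 G T q"
    and h: "\<And>g h. g\<in>carrier G \<Longrightarrow> h\<in>carrier G \<Longrightarrow>
       int q dvd (f (g, h) - f' (g, h) - (c h - c (g \<otimes>\<^bsub>G\<^esub> h) + c g))"
    unfolding cohom2_iff by blast
  from assms(3) obtain d where d: "d \<in> C1 G T q"
    and h': "\<And>g h. g\<in>carrier G \<Longrightarrow> h\<in>carrier G \<Longrightarrow>
       int q dvd (f' (g, h) - f'' (g, h) - (d h - d (g \<otimes>\<^bsub>G\<^esub> h) + d g))"
    unfolding cohom2_iff by blast
  show ?thesis unfolding cohom2_iff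
  proof (intro bexI[OF _ C1_add[OF q c d]] ballI)
    fix g h assume gh: "g\<in>carrier G" "h\<in>carrier G"
    let ?c = "add2 q c d"
    have e: "int q dvd (?c x - c x - d x)" for x
      using dvd_mod_self[of q "c x + d x"] by (simp add: add2_def diff_diff_eq)
    have "f (g, h) - f'' (g, h) - (?c h - ?c (g \<otimes>\<^bsub>G\<^esub> h) + ?c g) =
       (f (g, h) - f' (g, h) - (c h - c (g \<otimes>\<^bsub>G\<^esub> h) + c g))
       + (f' (g, h) - f'' (g, h) - (d h - d (g \<otimes>\<^bsub>G\<^esub> h) + d g))
       - (?c h - c h - d h) + (?c (g \<otimes>\<^bsub>G\<^esub> h) - c (g \<otimes>\<^bsub>G\<^esub> h) - d (g \<otimes>\<^bsub>G\<^esub> h)) - (?c g - c g - d g)"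
      by (rule eq_trans)
    also have "int q dvd \<dots>"
      by (rule dvd_diff[OF dvd_add[OF dvd_diff[OF dvd_add[OF h[OF gh] h'[OF gh]] e] e] e])
    finally show "int q dvd (f (g, h) - f'' (g, h) - (?c h - ?c (g \<otimes>\<^bsub>G\<^esub> h) + ?c g))" .
  qed
qed

lemma cohom2_add:
  assumes q: "q > 0" and "cohom2 G T q f f'" "cohom2 G T q g g'"
  shows "cohom2 G T q (add2 q f g) (add2 q f' g')"
proof -
  from assms(2) obtain c where c: "c \<in> C1 G T q"
    and h: "\<And>x y. x\<in>carrier G \<Longrightarrow> y\<in>carrier G \<Longrightarrow>
       int q dvd (f (x, y) - f' (x, y) - (c y - c (x \<otimes>\<^bsub>G\<^esub> y) + c x))"
    unfolding cohom2_iff by blast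
  from assms(3) obtain d where d: "d \<in> C1 G T q"
    and h': "\<And>x y. x\<in>carrier G \<Longrightarrow> y\<in>carrier G \<Longrightarrow>
       int q dvd (g (x, y) - g' (x, y) - (d y - d (x \<otimes>\<^bsub>G\<^esub> y) + d x))"
    unfolding cohom2_iff by blast
  show ?thesis unfolding cohom2_iff
  proof (intro bexI[OF _ C1_add[OF q c d]] ballI)
    fix x y assume xy: "x\<in>carrier G" "y\<in>carrier G"
    let ?c = "add2 q c d"
    have e: "int q dvd (?c z - c z - d z)" for z
      using dvd_mod_self[of q "c z + d z"] by (simp add: add2_def diff_diff_eq)
    have e2: "int q dvd (add2 q f g z - f z - g z)" for z
      using dvd_mod_self[of q "f z + g z"] by (simp add: add2_def diff_diff_eq)
    have e3: "int q dvd (add2 q f' g' z - f' z - g' z)" for z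
      using dvd_mod_self[of q "f' z + g' z"] by (simp add: add2_def diff_diff_eq)
    have "add2 q f g (x, y) - add2 q f' g' (x, y) - (?c y - ?c (x \<otimes>\<^bsub>G\<^esub> y) + ?c x) =
       (f (x, y) - f' (x, y) - (c y - c (x \<otimes>\<^bsub>G\<^esub> y) + c x))
       + (g (x, y) - g' (x, y) - (d y - d (x \<otimes>\<^bsub>G\<^esub> y) + d x))
       + (add2 q f g (x, y) - f (x, y) - g (x, y)) - (add2 q f' g' (x, y) - f' (x, y) - g' (x, y))
       - (?c y - c y - d y) + (?c (x \<otimes>\<^bsub>G\<^esub> y) - c (x \<otimes>\<^bsub>G\<^esub> y) - d (x \<otimes>\<^bsub>G\<^esub> y)) - (?c x - c x - d x)"
      by (rule eq_add)
    also have "int q dvd \<dots>"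
      by (rule dvd_diff[OF dvd_add[OF dvd_diff[OF dvd_diff[OF dvd_add[OF dvd_add[OF h[OF xy] h'[OF xy]] e2] e3] e] e] e])
    finally show "int q dvd (add2 q f g (x, y) - add2 q f' g' (x, y) - (?c y - ?c (x \<otimes>\<^bsub>G\<^esub> y) + ?c x))" .
  qed
qed

lemma cohom2_dvd:
  assumes q: "q > 0" and "\<And>x y. x\<in>carrier G \<Longrightarrow> y\<in>carrier G \<Longrightarrow> int q dvd (f (x,y) - f' (x,y))"
  shows "cohom2 G T q f f'"
  unfolding cohom2_iff using assms by (intro bexI[OF _ C1_zero[OF q]]) auto

lemma cls2_eq: "q > 0 \<Longrightarrow> cohom2 G T q f f' \<Longrightarrow> cls2 G T q f = cls2 G T q f'"
  unfolding cls2_def by (auto intro: cohom2_trans cohom2_sym)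

lemma cls2_cohom: "x \<in> cls2 G T q f \<Longrightarrow> cohom2 G T q f x"
  by (simp add: cls2_def)

lemma cls2_self: "q > 0 \<Longrightarrow> f \<in> Z2 G T q \<Longrightarrow> f \<in> cls2 G T q f"
  unfolding cls2_def by (auto intro: cohom2_refl)

lemma Z2_cont: "f \<in> Z2 G T q \<Longrightarrow> continuous_map (prod_topology T T) (ZqT q) f"
  by (simp add: Z2_def)

lemma Z2_off: "f \<in> Z2 G T q \<Longrightarrow> x \<notin> carrier G \<times> carrier G \<Longrightarrow> f x = 0"
  unfolding Z2_def by blast

lemma Z2_zero: "q > 0 \<Longrightarrow> (\<lambda>_. 0) \<in> Z2 G T q"
  by (simp add: Z2_def cont_Zq_const del: continuous_map_const)

lemma Z2_cocycle: "f \<in> Z2 G T q \<Longrightarrow> g\<in>carrier G \<Longrightarrow> h\<in>carrier G \<Longrightarrow> k\<in>carrier G \<Longrightarrow>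
   int q dvd (f (h, k) - f (g \<otimes>\<^bsub>G\<^esub> h, k) + f (g, h \<otimes>\<^bsub>G\<^esub> k) - f (g, h))"
  unfolding Z2_def by (auto simp: mod_eq_0_iff_dvd)

lemma Z2I:
  assumes "continuous_map (prod_topology T T) (ZqT q) f"
    "\<And>x. x \<notin> carrier G \<times> carrier G \<Longrightarrow> f x = 0"
    "\<And>g h k. g\<in>carrier G \<Longrightarrow> h\<in>carrier G \<Longrightarrow> k\<in>carrier G \<Longrightarrow>
      int q dvd (f (h, k) - f (g \<otimes>\<^bsub>G\<^esub> h, k) + f (g, h \<otimes>\<^bsub>G\<^esub> k) - f (g, h))"
  shows "f \<in> Z2 G T q"
  using assms unfolding Z2_def by (auto simp: mod_eq_0_iff_dvd)

lemma Z2_add: assumes q: "q > 0" and f: "f \<in> Z2 G T q" and g: "g \<in> Z2 G T q"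
  shows "add2 q f g \<in> Z2 G T q"
proof (rule Z2I)
  show "continuous_map (prod_topology T T) (ZqT q) (add2 q f g)"
    unfolding add2_def
    by (rule cont_Zq_comb[OF Z2_cont[OF f] Z2_cont[OF g], where \<phi>="\<lambda>a b. (a + b) mod int q"])
       (auto intro: mod_in_Zq[OF q])
  show "add2 q f g x = 0" if "x \<notin> carrier G \<times> carrier G" for x
    using that Z2_off[OF f] Z2_off[OF g] by (simp add: add2_def)
  fix x y z assume xyz: "x\<in>carrier G" "y\<in>carrier G" "z\<in>carrier G"
  have e2: "int q dvd (add2 q f g w - f w - g w)" for w
    using dvd_mod_self[of q "f w + g w"] by (simp add: add2_def diff_diff_eq)
  let ?s = "add2 q f g"
  have "?s (y, z) - ?s (x \<otimes>\<^bsub>G\<^esub> y, z) + ?s (x, y \<otimes>\<^bsub>G\<^esub> z) - ?s (x, y) =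
     (f (y, z) - f (x \<otimes>\<^bsub>G\<^esub> y, z) + f (x, y \<otimes>\<^bsub>G\<^esub> z) - f (x, y))
     + (g (y, z) - g (x \<otimes>\<^bsub>G\<^esub> y, z) + g (x, y \<otimes>\<^bsub>G\<^esub> z) - g (x, y))
     + (?s (y, z) - f (y, z) - g (y, z)) - (?s (x \<otimes>\<^bsub>G\<^esub> y, z) - f (x \<otimes>\<^bsub>G\<^esub> y, z) - g (x \<otimes>\<^bsub>G\<^esub> y, z))
     + (?s (x, y \<otimes>\<^bsub>G\<^esub> z) - f (x, y \<otimes>\<^bsub>G\<^esub> z) - g (x, y \<otimes>\<^bsub>G\<^esub> z)) - (?s (x, y) - f (x, y) - g (x, y))"
    by (rule eq_Z2add)
  also have "int q dvd \<dots>"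
    by (rule dvd_diff[OF dvd_add[OF dvd_diff[OF dvd_add[OF dvd_add[OF Z2_cocycle[OF f xyz] Z2_cocycle[OF g xyz]] e2] e2] e2] e2])
  finally show "int q dvd (?s (y, z) - ?s (x \<otimes>\<^bsub>G\<^esub> y, z) + ?s (x, y \<otimes>\<^bsub>G\<^esub> z) - ?s (x, y))" .
qed

lemma Z2_neg: assumes q: "q > 0" and f: "f \<in> Z2 G T q"
  shows "neg2 q f \<in> Z2 G T q"
proof (rule Z2I)
  show "continuous_map (prod_topology T T) (ZqT q) (neg2 q f)"
    unfolding neg2_def
    by (rule cont_Zq_comp1[OF Z2_cont[OF f], where \<phi>="\<lambda>a. (- a) mod int q"])
       (auto intro: mod_in_Zq[OF q])
  show "neg2 q f x = 0" if "x \<notin> carrier G \<times> carrier G" for x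
    using that Z2_off[OF f] by (simp add: neg2_def)
  fix x y z assume xyz: "x\<in>carrier G" "y\<in>carrier G" "z\<in>carrier G"
  have e2: "int q dvd (neg2 q f w + f w)" for w
    using dvd_mod_self[of q "- f w"] by (simp add: neg2_def)
  let ?s = "neg2 q f"
  have "?s (y, z) - ?s (x \<otimes>\<^bsub>G\<^esub> y, z) + ?s (x, y \<otimes>\<^bsub>G\<^esub> z) - ?s (x, y) =
     - (f (y, z) - f (x \<otimes>\<^bsub>G\<^esub> y, z) + f (x, y \<otimes>\<^bsub>G\<^esub> z) - f (x, y))
     + (?s (y, z) + f (y, z)) - (?s (x \<otimes>\<^bsub>G\<^esub> y, z) + f (x \<otimes>\<^bsub>G\<^esub> y, z))
     + (?s (x, y \<otimes>\<^bsub>G\<^esub> z) + f (x, y \<otimes>\<^bsub>G\<^esub> z)) - (?s (x, y) + f (x, y))"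
    by (rule eq_Z2neg)
  also have "int q dvd \<dots>"
    by (rule dvd_diff[OF dvd_add[OF dvd_diff[OF dvd_add[OF dvd_neg[OF Z2_cocycle[OF f xyz]] e2] e2] e2] e2])
  finally show "int q dvd (?s (y, z) - ?s (x \<otimes>\<^bsub>G\<^esub> y, z) + ?s (x, y \<otimes>\<^bsub>G\<^esub> z) - ?s (x, y))" .
qed

lemma H2_carrier: "carrier (H2 G T q) = cls2 G T q ` Z2 G T q"
  by (simp add: H2_def)

lemma H2_one: "\<one>\<^bsub>H2 G T q\<^esub> = cls2 G T q (\<lambda>_. 0)"
  by (simp add: H2_def)

lemma H2_mult:
  assumes q: "q > 0" and f: "f \<in> Z2 G T q" and g: "g \<in> Z2 G T q"
  shows "cls2 G T q f \<otimes>\<^bsub>H2 G T q\<^esub> cls2 G T q g = cls2 G T q (add2 q f g)"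
proof -
  let ?a = "SOME a. a \<in> cls2 G T q f" and ?b = "SOME b. b \<in> cls2 G T q g"
  have a: "?a \<in> cls2 G T q f" by (rule someI[of "\<lambda>a. a \<in> cls2 G T q f" f, OF cls2_self[OF q f]])
  have b: "?b \<in> cls2 G T q g" by (rule someI[of "\<lambda>a. a \<in> cls2 G T q g" g, OF cls2_self[OF q g]])
  note c1 = cls2_cohom[OF a] and c2 = cls2_cohom[OF b]
  have "cohom2 G T q (add2 q ?a ?b) (add2 q f g)"
    using cohom2_sym[OF q cohom2_add[OF q c1 c2]] .
  then have e: "cls2 G T q (add2 q ?a ?b) = cls2 G T q (add2 q f g)" by (rule cls2_eq[OF q])
  have "cls2 G T q f \<otimes>\<^bsub>H2 G T q\<^esub> cls2 G T q g = cls2 G T q (add2 q ?a ?b)"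
    unfolding H2_def add2_def by simp
  then show ?thesis using e by (rule trans)
qed

lemma H2_comm_group: assumes q: "q > 0" shows "comm_group (H2 G T q)"
proof (rule comm_groupI)
  show "x \<otimes>\<^bsub>H2 G T q\<^esub> y \<in> carrier (H2 G T q)"
    if "x \<in> carrier (H2 G T q)" "y \<in> carrier (H2 G T q)" for x y
  proof -
    from that obtain f g where f: "f \<in> Z2 G T q" "x = cls2 G T q f"
      and g: "g \<in> Z2 G T q" "y = cls2 G T q g"
      by (auto simp: H2_carrier)
    show ?thesis using f g Z2_add[OF q f(1) g(1)]
      by (simp add: H2_mult[OF q] H2_carrier)
  qed
  show "\<one>\<^bsub>H2 G T q\<^esub> \<in> carrier (H2 G T q)"
    by (simp add: H2_carrier H2_one Z2_zero[OF q])
  show "x \<otimes>\<^bsub>H2 G T q\<^esub> y \<otimes>\<^bsub>H2 G T q\<^esub> z = x \<otimes>\<^bsub>H2 G T q\<^esub> (y \<otimes>\<^bsub>H2 G T q\<^esub> z)"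
    if "x \<in> carrier (H2 G T q)" "y \<in> carrier (H2 G T q)" "z \<in> carrier (H2 G T q)" for x y z
  proof -
    from that obtain f g h where f: "f \<in> Z2 G T q" "x = cls2 G T q f"
      and g: "g \<in> Z2 G T q" "y = cls2 G T q g" and h: "h \<in> Z2 G T q" "z = cls2 G T q h"
      by (auto simp: H2_carrier)
    have e: "add2 q (add2 q f g) h = add2 q f (add2 q g h)"
      by (rule ext) (simp add: add2_def mod_add_left_eq mod_add_right_eq add.assoc)
    show ?thesis using f g h
      by (simp add: H2_mult[OF q] Z2_add[OF q] e)
  qed
  show "x \<otimes>\<^bsub>H2 G T q\<^esub> y = y \<otimes>\<^bsub>H2 G T q\<^esub> x"
    if "x \<in> carrier (H2 G T q)" "y \<in> carrier (H2 G T q)" for x y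
  proof -
    from that obtain f g where f: "f \<in> Z2 G T q" "x = cls2 G T q f"
      and g: "g \<in> Z2 G T q" "y = cls2 G T q g"
      by (auto simp: H2_carrier)
    have e: "add2 q f g = add2 q g f"
      by (simp add: add2_def add.commute)
    show ?thesis using f g
      by (simp add: H2_mult[OF q] e)
  qed
  show "\<one>\<^bsub>H2 G T q\<^esub> \<otimes>\<^bsub>H2 G T q\<^esub> x = x" if "x \<in> carrier (H2 G T q)" for x
  proof -
    from that obtain f where f: "f \<in> Z2 G T q" "x = cls2 G T q f" by (auto simp: H2_carrier)
    have "cohom2 G T q (add2 q (\<lambda>_. 0) f) f"
      by (rule cohom2_sym[OF q]) (simp add: add2_def cohom2_modq[OF q])
    then have "cls2 G T q (add2 q (\<lambda>_. 0) f) = x" using f(2) cls2_eq[OF q] by metis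
    then show ?thesis using f by (simp add: H2_one H2_mult[OF q] Z2_zero[OF q])
  qed
  show "\<exists>y\<in>carrier (H2 G T q). y \<otimes>\<^bsub>H2 G T q\<^esub> x = \<one>\<^bsub>H2 G T q\<^esub>"
    if "x \<in> carrier (H2 G T q)" for x
  proof -
    from that obtain f where f: "f \<in> Z2 G T q" "x = cls2 G T q f" by (auto simp: H2_carrier)
    have "cohom2 G T q (add2 q (neg2 q f) f) (\<lambda>_. 0)"
      by (rule cohom2_dvd[OF q]) (simp add: add2_def neg2_def mod_simps)
    then have "cls2 G T q (add2 q (neg2 q f) f) = cls2 G T q (\<lambda>_. 0)" by (rule cls2_eq[OF q])
    then have "cls2 G T q (neg2 q f) \<otimes>\<^bsub>H2 G T q\<^esub> x = \<one>\<^bsub>H2 G T q\<^esub>"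
      using f by (simp add: H2_one H2_mult[OF q] Z2_neg[OF q f(1)])
    moreover have "cls2 G T q (neg2 q f) \<in> carrier (H2 G T q)"
      using Z2_neg[OF q f(1)] by (simp add: H2_carrier)
    ultimately show ?thesis by blast
  qed
qed

lemma (in group) conj_hom:
  assumes g: "g \<in> carrier G" shows "(\<lambda>x. g \<otimes> x \<otimes> inv g) \<in> hom G G"
  unfolding hom_def
proof (intro CollectI conjI ballI)
  show "(\<lambda>x. g \<otimes> x \<otimes> inv g) \<in> carrier G \<rightarrow> carrier G" using g by auto
  fix x y assume x: "x \<in> carrier G" and y: "y \<in> carrier G"
  have cancel: "\<And>w. w \<in> carrier G \<Longrightarrow> inv g \<otimes> (g \<otimes> w) = w"
    using g by (simp add: m_assoc[symmetric])
  have "g \<otimes> x \<otimes> inv g \<otimes> (g \<otimes> y \<otimes> inv g) = g \<otimes> (x \<otimes> y) \<otimes> inv g"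
    using g x y by (simp add: m_assoc cancel)
  then show "g \<otimes> (x \<otimes> y) \<otimes> inv g = g \<otimes> x \<otimes> inv g \<otimes> (g \<otimes> y \<otimes> inv g)" by simp
qed

context
  fixes G :: "('a, 'b) monoid_scheme" and T :: "'a topology" and q :: nat
  assumes TG: "topological_group G T"
begin

lemma TG_group: "group G" using TG by (simp add: topological_group_def)
lemma TG_ts: "topspace T = carrier G" using TG by (simp add: topological_group_def)
lemma TG_mult: "continuous_map (prod_topology T T) T (\<lambda>(x, y). x \<otimes>\<^bsub>G\<^esub> y)"
  using TG by (simp add: topological_group_def)
lemma TG_inv: "continuous_map T T (\<lambda>x. inv\<^bsub>G\<^esub> x)"
  using TG by (simp add: topological_group_def)

interpretation grp: group G by (rule TG_group)

definition Sgen where "Sgen = ({x [^]\<^bsub>G\<^esub> q | x. x \<in> carrier G}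
      \<union> {x \<otimes>\<^bsub>G\<^esub> y \<otimes>\<^bsub>G\<^esub> inv\<^bsub>G\<^esub> x \<otimes>\<^bsub>G\<^esub> inv\<^bsub>G\<^esub> y | x y. x \<in> carrier G \<and> y \<in> carrier G})"

lemma Sgen_mem: "s \<in> Sgen \<Longrightarrow> (\<exists>x\<in>carrier G. s = x [^]\<^bsub>G\<^esub> q) \<or>
   (\<exists>x\<in>carrier G. \<exists>y\<in>carrier G. s = x \<otimes>\<^bsub>G\<^esub> y \<otimes>\<^bsub>G\<^esub> inv\<^bsub>G\<^esub> x \<otimes>\<^bsub>G\<^esub> inv\<^bsub>G\<^esub> y)"
  unfolding Sgen_def by blast

lemma Sgen_sub: "Sgen \<subseteq> carrier G" unfolding Sgen_def by auto

lemma K_normal: "generate G Sgen \<lhd> G"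
proof (rule grp.normal_generateI[OF Sgen_sub])
  fix h g assume h: "h \<in> Sgen" and g: "g \<in> carrier G"
  interpret gh: group_hom G G "\<lambda>x. g \<otimes>\<^bsub>G\<^esub> x \<otimes>\<^bsub>G\<^esub> inv\<^bsub>G\<^esub> g"
    using grp.conj_hom[OF g] by (simp add: group_hom_def group_hom_axioms_def grp.is_group)
  let ?c = "\<lambda>x. g \<otimes>\<^bsub>G\<^esub> x \<otimes>\<^bsub>G\<^esub> inv\<^bsub>G\<^esub> g"
  show "g \<otimes>\<^bsub>G\<^esub> h \<otimes>\<^bsub>G\<^esub> inv\<^bsub>G\<^esub> g \<in> Sgen"
    using h unfolding Sgen_def
  proof (elim UnE CollectE exE conjE)
    fix x assume "h = x [^]\<^bsub>G\<^esub> q" "x \<in> carrier G"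
    then have "?c h = (?c x) [^]\<^bsub>G\<^esub> q" using gh.hom_nat_pow by simp
    then show "?c h \<in> {x [^]\<^bsub>G\<^esub> q | x. x \<in> carrier G} \<union> {x \<otimes>\<^bsub>G\<^esub> y \<otimes>\<^bsub>G\<^esub> inv\<^bsub>G\<^esub> x \<otimes>\<^bsub>G\<^esub> inv\<^bsub>G\<^esub> y | x y. x \<in> carrier G \<and> y \<in> carrier G}"
      using \<open>x \<in> carrier G\<close> g by blast
  next
    fix x y assume h: "h = x \<otimes>\<^bsub>G\<^esub> y \<otimes>\<^bsub>G\<^esub> inv\<^bsub>G\<^esub> x \<otimes>\<^bsub>G\<^esub> inv\<^bsub>G\<^esub> y" "x \<in> carrier G" "y \<in> carrier G"
    then have "?c h = ?c x \<otimes>\<^bsub>G\<^esub> ?c y \<otimes>\<^bsub>G\<^esub> inv\<^bsub>G\<^esub> (?c x) \<otimes>\<^bsub>G\<^esub> inv\<^bsub>G\<^esub> (?c y)"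
      by (simp only: gh.hom_mult gh.hom_inv grp.m_closed grp.inv_closed)
    then show "?c h \<in> {x [^]\<^bsub>G\<^esub> q | x. x \<in> carrier G} \<union> {x \<otimes>\<^bsub>G\<^esub> y \<otimes>\<^bsub>G\<^esub> inv\<^bsub>G\<^esub> x \<otimes>\<^bsub>G\<^esub> inv\<^bsub>G\<^esub> y | x y. x \<in> carrier G \<and> y \<in> carrier G}"
      using h g by blast
  qed
qed

lemma N_def': "Gsub2 G T q = T closure_of generate G Sgen"
  by (simp add: Gsub2_def Sgen_def)

lemma K_sub: "generate G Sgen \<subseteq> carrier G"
  by (rule grp.generate_incl[OF Sgen_sub])

lemma K_N: "generate G Sgen \<subseteq> Gsub2 G T q"
  unfolding N_def' by (rule closure_of_subset) (simp add: TG_ts K_sub)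

lemma N_sub: "Gsub2 G T q \<subseteq> carrier G"
  unfolding N_def' using closure_of_subset_topspace TG_ts by metis

lemma closure_mapped:
  assumes c: "continuous_map X T f" and img: "f ` S \<subseteq> generate G Sgen"
  shows "f ` (X closure_of S) \<subseteq> Gsub2 G T q"
proof -
  have "f ` (X closure_of S) \<subseteq> T closure_of (f ` S)"
    by (rule continuous_map_image_closure_subset[OF c])
  also have "\<dots> \<subseteq> T closure_of generate G Sgen" by (rule closure_of_mono[OF img])
  finally show ?thesis by (simp add: N_def')
qed

lemma N_normal: "Gsub2 G T q \<lhd> G"
proof -
  let ?K = "generate G Sgen" and ?N = "Gsub2 G T q"
  have Ksg: "subgroup ?K G" using K_normal by (simp add: normal_def)
  have sg: "subgroup ?N G"
  proof (rule grp.subgroupI)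
    show "?N \<subseteq> carrier G" by (rule N_sub)
    show "?N \<noteq> {}" using K_N subgroup.one_closed[OF Ksg] by blast
  next
    fix a assume a: "a \<in> ?N"
    have "(\<lambda>x. inv\<^bsub>G\<^esub> x) ` (T closure_of ?K) \<subseteq> ?N"
      by (rule closure_mapped[OF TG_inv]) (auto intro: subgroup.m_inv_closed[OF Ksg])
    then show "inv\<^bsub>G\<^esub> a \<in> ?N" using a by (auto simp: N_def')
  next
    fix a b assume a: "a \<in> ?N" and b: "b \<in> ?N"
    have "(\<lambda>(x, y). x \<otimes>\<^bsub>G\<^esub> y) ` ((prod_topology T T) closure_of (?K \<times> ?K)) \<subseteq> ?N"
      by (rule closure_mapped[OF TG_mult]) (auto intro: subgroup.m_closed[OF Ksg])
    then show "a \<otimes>\<^bsub>G\<^esub> b \<in> ?N" using a b by (auto simp: N_def' closure_of_Times)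
  qed
  show ?thesis
  proof (rule grp.normal_invI[OF sg])
    fix x h assume x: "x \<in> carrier G" and h: "h \<in> ?N"
    have c1: "continuous_map T (prod_topology T T) (\<lambda>y. (x, y))"
      using x by (intro continuous_map_pairedI continuous_map_id) (auto simp: TG_ts)
    have c2: "continuous_map T T (\<lambda>y. x \<otimes>\<^bsub>G\<^esub> y)"
      using continuous_map_compose[OF c1 TG_mult] by (simp add: o_def)
    have c3: "continuous_map T (prod_topology T T) (\<lambda>y. (x \<otimes>\<^bsub>G\<^esub> y, inv\<^bsub>G\<^esub> x))"
      using x c2 by (intro continuous_map_pairedI) (auto simp: TG_ts)
    have c4: "continuous_map T T (\<lambda>y. x \<otimes>\<^bsub>G\<^esub> y \<otimes>\<^bsub>G\<^esub> inv\<^bsub>G\<^esub> x)"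
      using continuous_map_compose[OF c3 TG_mult] by (simp add: o_def)
    have "(\<lambda>y. x \<otimes>\<^bsub>G\<^esub> y \<otimes>\<^bsub>G\<^esub> inv\<^bsub>G\<^esub> x) ` (T closure_of ?K) \<subseteq> ?N"
      by (rule closure_mapped[OF c4]) (auto intro: grp.normal_invE(2)[OF K_normal x])
    then show "x \<otimes>\<^bsub>G\<^esub> h \<otimes>\<^bsub>G\<^esub> inv\<^bsub>G\<^esub> x \<in> ?N" using h by (auto simp: N_def')
  qed
qed

end

lemma dvd_small: "int q dvd a \<Longrightarrow> 0 \<le> a \<Longrightarrow> a < int q \<Longrightarrow> a = 0"
proof (rule ccontr)
  assume "int q dvd a" "0 \<le> a" "a < int q" "a \<noteq> 0"
  then have "\<bar>int q\<bar> \<le> \<bar>a\<bar>" using dvd_imp_le_int by blast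
  then show False using \<open>0 \<le> a\<close> \<open>a < int q\<close> by simp
qed

lemma H1_cont: "\<psi> \<in> H1 G T q \<Longrightarrow> continuous_map T (ZqT q) \<psi>"
  by (simp add: H1_def)
lemma H1_off: "\<psi> \<in> H1 G T q \<Longrightarrow> x \<notin> carrier G \<Longrightarrow> \<psi> x = 0"
  by (simp add: H1_def)
lemma H1_hom: "\<psi> \<in> H1 G T q \<Longrightarrow> g \<in> carrier G \<Longrightarrow> h \<in> carrier G \<Longrightarrow>
    \<psi> (g \<otimes>\<^bsub>G\<^esub> h) = (\<psi> g + \<psi> h) mod int q"
  by (simp add: H1_def)
lemma H1_val: assumes "\<psi> \<in> H1 G T q" "x \<in> topspace T" shows "\<psi> x \<in> Zq q"
proof -
  have "\<forall>x\<in>topspace T. \<psi> x \<in> Zq q"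
    using cont_Zq_iff[THEN iffD1, OF H1_cont[OF assms(1)]] by (rule conjunct1)
  then show ?thesis using assms(2) by (rule bspec)
qed
lemma H1_fiber: assumes "\<psi> \<in> H1 G T q" shows "openin T {x \<in> topspace T. \<psi> x = y}"
proof -
  have "\<forall>y. openin T {x \<in> topspace T. \<psi> x = y}"
    using cont_Zq_iff[THEN iffD1, OF H1_cont[OF assms(1)]] by (rule conjunct2)
  then show ?thesis by (rule spec)
qed
lemma H1I: "continuous_map T (ZqT q) \<psi> \<Longrightarrow> (\<And>x. x \<notin> carrier G \<Longrightarrow> \<psi> x = 0) \<Longrightarrow>
   (\<And>g h. g \<in> carrier G \<Longrightarrow> h \<in> carrier G \<Longrightarrow> \<psi> (g \<otimes>\<^bsub>G\<^esub> h) = (\<psi> g + \<psi> h) mod int q)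
   \<Longrightarrow> \<psi> \<in> H1 G T q"
  by (simp add: H1_def)

definition iota :: "('a, 'b) monoid_scheme \<Rightarrow> 'a topology \<Rightarrow> nat \<Rightarrow> ('a set \<Rightarrow> int) \<Rightarrow> ('a \<Rightarrow> int)" where
  "iota G T q \<psi> = (\<lambda>g. if g \<in> carrier G then \<psi> (Gsub2 G T q #>\<^bsub>G\<^esub> g) else 0)"

definition lift :: "('a, 'b) monoid_scheme \<Rightarrow> 'a topology \<Rightarrow> nat \<Rightarrow> ('a \<Rightarrow> int) \<Rightarrow> ('a set \<Rightarrow> int)" where
  "lift G T q \<phi> = (\<lambda>C. if C \<in> carrier (Gquot2 G T q) then \<phi> (SOME g. g \<in> C) else 0)"

context
  fixes G :: "('a, 'b) monoid_scheme" and T :: "'a topology" and q :: nat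
  assumes TG: "topological_group G T" and q: "q > 0"
begin

interpretation grp: group G by (rule TG_group[OF TG])
interpretation nrm: normal "Gsub2 G T q" G by (rule N_normal[OF TG])

lemma Q_carrier: "carrier (Gquot2 G T q) = rcosets\<^bsub>G\<^esub> (Gsub2 G T q)"
  by (simp add: Gquot2_def FactGroup_def)
lemma Q_mult: "x \<otimes>\<^bsub>Gquot2 G T q\<^esub> y = x <#>\<^bsub>G\<^esub> y"
  by (simp add: Gquot2_def)
lemma Q_group: "group (Gquot2 G T q)"
  by (simp add: Gquot2_def nrm.factorgroup_is_group)

lemma pi_carrier: "g \<in> carrier G \<Longrightarrow> Gsub2 G T q #>\<^bsub>G\<^esub> g \<in> carrier (Gquot2 G T q)"
  by (simp add: Q_carrier grp.rcosetsI N_sub[OF TG])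
lemma pi_mult: "g \<in> carrier G \<Longrightarrow> h \<in> carrier G \<Longrightarrow>
   (Gsub2 G T q #>\<^bsub>G\<^esub> g) \<otimes>\<^bsub>Gquot2 G T q\<^esub> (Gsub2 G T q #>\<^bsub>G\<^esub> h) = Gsub2 G T q #>\<^bsub>G\<^esub> (g \<otimes>\<^bsub>G\<^esub> h)"
  by (simp add: Q_mult nrm.rcos_sum)
lemma Q_elem: "C \<in> carrier (Gquot2 G T q) \<Longrightarrow> \<exists>g\<in>carrier G. C = Gsub2 G T q #>\<^bsub>G\<^esub> g"
  by (auto simp: Q_carrier RCOSETS_def)
lemma self_in: "g \<in> carrier G \<Longrightarrow> g \<in> Gsub2 G T q #>\<^bsub>G\<^esub> g"
  by (rule grp.rcos_self[OF _ nrm.subgroup_axioms])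
lemma coset_eq: "g \<in> carrier G \<Longrightarrow> x \<in> Gsub2 G T q #>\<^bsub>G\<^esub> g \<Longrightarrow> Gsub2 G T q #>\<^bsub>G\<^esub> x = Gsub2 G T q #>\<^bsub>G\<^esub> g"
  using grp.repr_independence[OF _ _ nrm.subgroup_axioms] by metis
lemma coset_mem: "g \<in> carrier G \<Longrightarrow> x \<in> Gsub2 G T q #>\<^bsub>G\<^esub> g \<Longrightarrow> x \<in> carrier G"
  using grp.r_coset_subset_G[OF N_sub[OF TG]] by blast
lemma coset_decomp: "g \<in> carrier G \<Longrightarrow> x \<in> Gsub2 G T q #>\<^bsub>G\<^esub> g \<Longrightarrow>
    \<exists>n\<in>Gsub2 G T q. x = n \<otimes>\<^bsub>G\<^esub> g"
  by (auto simp: r_coset_def)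

lemma istop: "istopology (\<lambda>U. U \<subseteq> carrier (Gquot2 G T q) \<and> openin T (\<Union>U))"
proof -
  have 1: "openin T (\<Union>(S \<inter> U))"
    if S: "S \<subseteq> carrier (Gquot2 G T q)" "openin T (\<Union>S)"
    and U: "U \<subseteq> carrier (Gquot2 G T q)" "openin T (\<Union>U)" for S U
  proof -
    have "\<Union>(S \<inter> U) = \<Union>S \<inter> \<Union>U"
    proof
      show "\<Union>S \<inter> \<Union>U \<subseteq> \<Union>(S \<inter> U)"
      proof
        fix x assume "x \<in> \<Union>S \<inter> \<Union>U"
        then obtain A B where A: "A \<in> S" "x \<in> A" and B: "B \<in> U" "x \<in> B" by auto
        have "A \<in> carrier (Gquot2 G T q)" using A S by auto
        then obtain a where a: "a \<in> carrier G" "A = Gsub2 G T q #>\<^bsub>G\<^esub> a" using Q_elem by blast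
        have "B \<in> carrier (Gquot2 G T q)" using B U by auto
        then obtain b where b: "b \<in> carrier G" "B = Gsub2 G T q #>\<^bsub>G\<^esub> b" using Q_elem by blast
        have xa: "x \<in> Gsub2 G T q #>\<^bsub>G\<^esub> a" using A a by simp
        have xb: "x \<in> Gsub2 G T q #>\<^bsub>G\<^esub> b" using B b by simp
        have "A = B" using coset_eq[OF a(1) xa] coset_eq[OF b(1) xb] a(2) b(2) by simp
        then show "x \<in> \<Union>(S \<inter> U)" using A B by blast
      qed
    qed blast
    then show ?thesis using S U by auto
  qed
  have 2: "openin T (\<Union>(\<Union>K))" if K: "\<forall>U\<in>K. U \<subseteq> carrier (Gquot2 G T q) \<and> openin T (\<Union>U)" for K
  proof -
    have "\<Union>(\<Union>K) = \<Union>((\<lambda>U. \<Union>U) ` K)" by blast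
    then show ?thesis using K by auto
  qed
  show ?thesis unfolding istopology_def
    apply (intro conjI allI impI)
    subgoal by blast
    subgoal using 1 by blast
    subgoal by blast
    subgoal using 2 by blast
    done
qed

lemma openin_TQ: "openin (Tquot2 G T q) U \<longleftrightarrow> U \<subseteq> carrier (Gquot2 G T q) \<and> openin T (\<Union>U)"
  unfolding Tquot2_def using istop by simp

lemma topspace_TQ: "topspace (Tquot2 G T q) = carrier (Gquot2 G T q)"
proof
  show "topspace (Tquot2 G T q) \<subseteq> carrier (Gquot2 G T q)"
    using openin_TQ openin_topspace by blast
  have "\<Union>(carrier (Gquot2 G T q)) = carrier G"
    by (simp add: Q_carrier grp.rcosets_part_G[OF nrm.subgroup_axioms])
  then have "openin (Tquot2 G T q) (carrier (Gquot2 G T q))"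
    by (simp add: openin_TQ TG_ts[OF TG, symmetric])
  then show "carrier (Gquot2 G T q) \<subseteq> topspace (Tquot2 G T q)"
    by (rule openin_subset)
qed

lemma pi_cont: "continuous_map T (Tquot2 G T q) (\<lambda>g. Gsub2 G T q #>\<^bsub>G\<^esub> g)"
  unfolding continuous_map
proof (intro conjI allI impI)
  show "(\<lambda>g. Gsub2 G T q #>\<^bsub>G\<^esub> g) ` topspace T \<subseteq> topspace (Tquot2 G T q)"
    using pi_carrier by (auto simp: topspace_TQ TG_ts[OF TG])
  fix U assume U: "openin (Tquot2 G T q) U"
  have "{x \<in> topspace T. Gsub2 G T q #>\<^bsub>G\<^esub> x \<in> U} = \<Union>U"
  proof
    show "{x \<in> topspace T. Gsub2 G T q #>\<^bsub>G\<^esub> x \<in> U} \<subseteq> \<Union>U"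
      using self_in by (auto simp: TG_ts[OF TG])
    show "\<Union>U \<subseteq> {x \<in> topspace T. Gsub2 G T q #>\<^bsub>G\<^esub> x \<in> U}"
    proof
      fix x assume "x \<in> \<Union>U"
      then obtain C where C: "C \<in> U" "x \<in> C" by auto
      have "C \<in> carrier (Gquot2 G T q)" using C(1) U by (auto simp: openin_TQ)
      then obtain g where g: "g \<in> carrier G" "C = Gsub2 G T q #>\<^bsub>G\<^esub> g"
        using Q_elem by blast
      have xg: "x \<in> Gsub2 G T q #>\<^bsub>G\<^esub> g" using C(2) g(2) by simp
      have "x \<in> carrier G" by (rule coset_mem[OF g(1) xg])
      moreover have "Gsub2 G T q #>\<^bsub>G\<^esub> x \<in> U" using coset_eq[OF g(1) xg] g(2) C(1) by simp
      ultimately show "x \<in> {x \<in> topspace T. Gsub2 G T q #>\<^bsub>G\<^esub> x \<in> U}"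
        by (simp add: TG_ts[OF TG])
    qed
  qed
  then show "openin T {x \<in> topspace T. Gsub2 G T q #>\<^bsub>G\<^esub> x \<in> U}"
    using U openin_TQ by simp
qed

lemma iota_H1: assumes \<psi>: "\<psi> \<in> H1 (Gquot2 G T q) (Tquot2 G T q) q"
  shows "iota G T q \<psi> \<in> H1 G T q"
proof (rule H1I)
  show "continuous_map T (ZqT q) (iota G T q \<psi>)"
    by (rule continuous_map_eq[OF continuous_map_compose[OF pi_cont H1_cont[OF \<psi>]]])
       (simp add: iota_def TG_ts[OF TG])
  show "iota G T q \<psi> x = 0" if "x \<notin> carrier G" for x using that by (simp add: iota_def)
  fix g h assume g: "g \<in> carrier G" and h: "h \<in> carrier G"
  then show "iota G T q \<psi> (g \<otimes>\<^bsub>G\<^esub> h) = (iota G T q \<psi> g + iota G T q \<psi> h) mod int q"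
    using H1_hom[OF \<psi> pi_carrier[OF g] pi_carrier[OF h]]
    by (simp add: iota_def pi_mult)
qed

lemma iota_inj: "inj_on (iota G T q) (H1 (Gquot2 G T q) (Tquot2 G T q) q)"
proof (rule inj_onI)
  fix \<psi>1 \<psi>2 assume 1: "\<psi>1 \<in> H1 (Gquot2 G T q) (Tquot2 G T q) q"
    and 2: "\<psi>2 \<in> H1 (Gquot2 G T q) (Tquot2 G T q) q" and e: "iota G T q \<psi>1 = iota G T q \<psi>2"
  show "\<psi>1 = \<psi>2"
  proof
    fix C show "\<psi>1 C = \<psi>2 C"
    proof (cases "C \<in> carrier (Gquot2 G T q)")
      case True
      then obtain g where g: "g \<in> carrier G" "C = Gsub2 G T q #>\<^bsub>G\<^esub> g" using Q_elem by blast
      then show ?thesis using fun_cong[OF e, of g] by (simp add: iota_def)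
    next
      case False then show ?thesis using H1_off[OF 1] H1_off[OF 2] by simp
    qed
  qed
qed

context
  fixes \<phi> assumes \<phi>: "\<phi> \<in> H1 G T q"
begin

lemma phi_val: "x \<in> carrier G \<Longrightarrow> \<phi> x \<in> Zq q"
  using H1_val[OF \<phi>] TG_ts[OF TG] by auto

lemma phi_val_mod: "x \<in> carrier G \<Longrightarrow> \<phi> x mod int q = \<phi> x"
  using phi_val Zq_mod by blast

lemma phi_one: "\<phi> \<one>\<^bsub>G\<^esub> = 0"
proof -
  have "\<phi> \<one>\<^bsub>G\<^esub> = (\<phi> \<one>\<^bsub>G\<^esub> + \<phi> \<one>\<^bsub>G\<^esub>) mod int q"
    using H1_hom[OF \<phi>, of "\<one>\<^bsub>G\<^esub>" "\<one>\<^bsub>G\<^esub>"] by simp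
  then have "int q dvd \<phi> \<one>\<^bsub>G\<^esub>"
    by (metis add_diff_cancel_left' dvd_mod_self minus_diff_eq dvd_minus_iff)
  moreover have "\<phi> \<one>\<^bsub>G\<^esub> \<in> Zq q" using phi_val by simp
  ultimately show ?thesis by (auto simp: Zq_def intro: dvd_small)
qed

lemma phi_inv_dvd: "x \<in> carrier G \<Longrightarrow> int q dvd (\<phi> x + \<phi> (inv\<^bsub>G\<^esub> x))"
  using H1_hom[OF \<phi>, of x "inv\<^bsub>G\<^esub> x"] phi_one by (simp add: mod_eq_0_iff_dvd)

lemma zero_of_dvd: "x \<in> carrier G \<Longrightarrow> int q dvd \<phi> x \<Longrightarrow> \<phi> x = 0"
  using phi_val[of x] by (auto simp: Zq_def intro: dvd_small)

lemma phi_pow: "x \<in> carrier G \<Longrightarrow> \<phi> (x [^]\<^bsub>G\<^esub> (n::nat)) = (int n * \<phi> x) mod int q"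
proof (induction n)
  case 0 then show ?case by (simp add: phi_one)
next
  case (Suc n)
  have "\<phi> (x [^]\<^bsub>G\<^esub> Suc n) = (\<phi> (x [^]\<^bsub>G\<^esub> n) + \<phi> x) mod int q"
    using Suc.prems by (simp add: H1_hom[OF \<phi>])
  also have "\<dots> = (int (Suc n) * \<phi> x) mod int q"
    using Suc by (simp add: mod_simps algebra_simps)
  finally show ?case .
qed

definition Kphi where "Kphi = {g \<in> carrier G. \<phi> g = 0}"

lemma Kphi_subgroup: "subgroup Kphi G"
proof (rule grp.subgroupI)
  show "Kphi \<subseteq> carrier G" by (auto simp: Kphi_def)
  show "Kphi \<noteq> {}" using phi_one by (auto simp: Kphi_def)
  fix a assume "a \<in> Kphi"
  then show "inv\<^bsub>G\<^esub> a \<in> Kphi"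
    using phi_inv_dvd[of a] zero_of_dvd[of "inv\<^bsub>G\<^esub> a"] by (auto simp: Kphi_def)
next
  fix a b assume "a \<in> Kphi" "b \<in> Kphi"
  then show "a \<otimes>\<^bsub>G\<^esub> b \<in> Kphi" by (auto simp: Kphi_def H1_hom[OF \<phi>])
qed

lemma Sgen_Kphi: "Sgen G q \<subseteq> Kphi"
proof
  fix s assume "s \<in> Sgen G q"
  then have "(\<exists>x\<in>carrier G. s = x [^]\<^bsub>G\<^esub> q) \<or>
   (\<exists>x\<in>carrier G. \<exists>y\<in>carrier G. s = x \<otimes>\<^bsub>G\<^esub> y \<otimes>\<^bsub>G\<^esub> inv\<^bsub>G\<^esub> x \<otimes>\<^bsub>G\<^esub> inv\<^bsub>G\<^esub> y)"
    by (rule Sgen_mem[OF TG])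
  then show "s \<in> Kphi"
  proof (elim disjE bexE)
    fix x assume x: "x \<in> carrier G" and s: "s = x [^]\<^bsub>G\<^esub> q"
    then show "s \<in> Kphi" by (simp add: Kphi_def phi_pow)
  next
    fix x y assume x: "x \<in> carrier G" and y: "y \<in> carrier G"
      and s: "s = x \<otimes>\<^bsub>G\<^esub> y \<otimes>\<^bsub>G\<^esub> inv\<^bsub>G\<^esub> x \<otimes>\<^bsub>G\<^esub> inv\<^bsub>G\<^esub> y"
    have "\<phi> s = (\<phi> x + \<phi> y + \<phi> (inv\<^bsub>G\<^esub> x) + \<phi> (inv\<^bsub>G\<^esub> y)) mod int q"
      using x y by (simp add: s H1_hom[OF \<phi>] mod_simps)
    also have "\<dots> = ((\<phi> x + \<phi> (inv\<^bsub>G\<^esub> x)) + (\<phi> y + \<phi> (inv\<^bsub>G\<^esub> y))) mod int q"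
      by (simp add: ac_simps)
    also have "\<dots> = 0"
      using dvd_add[OF phi_inv_dvd[OF x] phi_inv_dvd[OF y]] by (simp add: mod_eq_0_iff_dvd)
    finally show "s \<in> Kphi" using x y s by (simp add: Kphi_def)
  qed
qed

lemma Kphi_closed: "closedin T Kphi"
proof -
  have "topspace T - Kphi = \<Union>((\<lambda>y. {x \<in> topspace T. \<phi> x = y}) ` {y. y \<noteq> 0})"
    by (auto simp: Kphi_def TG_ts[OF TG])
  also have "openin T \<dots>" using H1_fiber[OF \<phi>] by (intro openin_Union) auto
  finally show ?thesis unfolding closedin_def by (auto simp: Kphi_def TG_ts[OF TG])
qed

lemma N_Kphi: "Gsub2 G T q \<subseteq> Kphi"
  unfolding N_def'[OF TG]
  by (rule closure_of_minimal[OF _ Kphi_closed])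
     (rule grp.generate_subgroup_incl[OF Sgen_Kphi Kphi_subgroup])

lemma phi_coset: "g \<in> carrier G \<Longrightarrow> x \<in> Gsub2 G T q #>\<^bsub>G\<^esub> g \<Longrightarrow> \<phi> x = \<phi> g"
proof -
  assume g: "g \<in> carrier G" and x: "x \<in> Gsub2 G T q #>\<^bsub>G\<^esub> g"
  obtain n where n: "n \<in> Gsub2 G T q" "x = n \<otimes>\<^bsub>G\<^esub> g" using coset_decomp[OF g x] by blast
  have "\<phi> n = 0" using N_Kphi n by (auto simp: Kphi_def)
  then show ?thesis using n g N_sub[OF TG] by (auto simp: H1_hom[OF \<phi>] phi_val_mod)
qed

lemma lift_pi: "g \<in> carrier G \<Longrightarrow> lift G T q \<phi> (Gsub2 G T q #>\<^bsub>G\<^esub> g) = \<phi> g"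
proof -
  assume g: "g \<in> carrier G"
  have "(SOME x. x \<in> Gsub2 G T q #>\<^bsub>G\<^esub> g) \<in> Gsub2 G T q #>\<^bsub>G\<^esub> g"
    using someI[of "\<lambda>x. x \<in> Gsub2 G T q #>\<^bsub>G\<^esub> g" g] self_in[OF g] by blast
  then show ?thesis using g pi_carrier[OF g] phi_coset[OF g] by (simp add: lift_def)
qed

lemma lift_H1: "lift G T q \<phi> \<in> H1 (Gquot2 G T q) (Tquot2 G T q) q"
proof (rule H1I)
  show "continuous_map (Tquot2 G T q) (ZqT q) (lift G T q \<phi>)"
    unfolding cont_Zq_iff
  proof (intro conjI ballI allI)
    fix C assume "C \<in> topspace (Tquot2 G T q)"
    then obtain g where g: "g \<in> carrier G" "C = Gsub2 G T q #>\<^bsub>G\<^esub> g"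
      using Q_elem topspace_TQ by auto
    then show "lift G T q \<phi> C \<in> Zq q" using lift_pi phi_val by simp
  next
    fix y
    have "\<Union>{C \<in> topspace (Tquot2 G T q). lift G T q \<phi> C = y} = {x \<in> topspace T. \<phi> x = y}"
    proof
      show "\<Union>{C \<in> topspace (Tquot2 G T q). lift G T q \<phi> C = y} \<subseteq> {x \<in> topspace T. \<phi> x = y}"
      proof
        fix x assume "x \<in> \<Union>{C \<in> topspace (Tquot2 G T q). lift G T q \<phi> C = y}"
        then obtain C where C: "C \<in> carrier (Gquot2 G T q)" "lift G T q \<phi> C = y" "x \<in> C"
          by (auto simp: topspace_TQ)
        then obtain g where g: "g \<in> carrier G" "C = Gsub2 G T q #>\<^bsub>G\<^esub> g" using Q_elem by blast
        then show "x \<in> {x \<in> topspace T. \<phi> x = y}"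
          using C lift_pi phi_coset coset_mem by (auto simp: TG_ts[OF TG])
      qed
      show "{x \<in> topspace T. \<phi> x = y} \<subseteq> \<Union>{C \<in> topspace (Tquot2 G T q). lift G T q \<phi> C = y}"
      proof
        fix x assume "x \<in> {x \<in> topspace T. \<phi> x = y}"
        then have x: "x \<in> carrier G" "\<phi> x = y" by (auto simp: TG_ts[OF TG])
        then show "x \<in> \<Union>{C \<in> topspace (Tquot2 G T q). lift G T q \<phi> C = y}"
          using self_in[OF x(1)] pi_carrier[OF x(1)] lift_pi[OF x(1)]
          by (auto simp: topspace_TQ)
      qed
    qed
    then show "openin (Tquot2 G T q) {C \<in> topspace (Tquot2 G T q). lift G T q \<phi> C = y}"
      using H1_fiber[OF \<phi>] by (auto simp: openin_TQ topspace_TQ)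
  qed
  show "lift G T q \<phi> x = 0" if "x \<notin> carrier (Gquot2 G T q)" for x
    using that by (simp add: lift_def)
  fix C D assume C: "C \<in> carrier (Gquot2 G T q)" and D: "D \<in> carrier (Gquot2 G T q)"
  obtain g where g: "g \<in> carrier G" "C = Gsub2 G T q #>\<^bsub>G\<^esub> g" using Q_elem C by blast
  obtain h where h: "h \<in> carrier G" "D = Gsub2 G T q #>\<^bsub>G\<^esub> h" using Q_elem D by blast
  show "lift G T q \<phi> (C \<otimes>\<^bsub>Gquot2 G T q\<^esub> D) = (lift G T q \<phi> C + lift G T q \<phi> D) mod int q"
    using g h by (simp add: pi_mult lift_pi H1_hom[OF \<phi>])
qed

lemma iota_lift: "iota G T q (lift G T q \<phi>) = \<phi>"
  by (rule ext) (simp add: iota_def lift_pi H1_off[OF \<phi>])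

end

lemma iota_bij: "bij_betw (iota G T q) (H1 (Gquot2 G T q) (Tquot2 G T q) q) (H1 G T q)"
  unfolding bij_betw_def
proof (intro conjI iota_inj)
  show "iota G T q ` H1 (Gquot2 G T q) (Tquot2 G T q) q = H1 G T q"
    using iota_H1 iota_lift lift_H1 by (auto intro!: image_eqI[where x = "lift G T q _"])
qed

end

definition cupc :: "('a, 'b) monoid_scheme \<Rightarrow> nat \<Rightarrow> ('a \<Rightarrow> int) \<Rightarrow> ('a \<Rightarrow> int) \<Rightarrow> ('a \<times> 'a \<Rightarrow> int)" where
  "cupc G q \<psi> \<psi>' = (\<lambda>(g, h). if g \<in> carrier G \<and> h \<in> carrier G then (\<psi> g * \<psi>' h) mod int q else 0)"

lemma cup_cupc: "cup G T q \<psi> \<psi>' = cls2 G T q (cupc G q \<psi> \<psi>')"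
  by (simp add: cup_def cupc_def)

lemma H1_add1: assumes q: "q > 0" and a: "a \<in> H1 G T q" and b: "b \<in> H1 G T q"
  shows "add1 q a b \<in> H1 G T q"
proof (rule H1I)
  show "continuous_map T (ZqT q) (add1 q a b)"
    unfolding add1_def
    by (rule cont_Zq_comb[OF H1_cont[OF a] H1_cont[OF b], where \<phi>="\<lambda>x y. (x + y) mod int q"])
       (auto intro: mod_in_Zq[OF q])
  show "add1 q a b x = 0" if "x \<notin> carrier G" for x
    using that H1_off[OF a] H1_off[OF b] by (simp add: add1_def)
  fix g h assume "g \<in> carrier G" "h \<in> carrier G"
  then have "add1 q a b (g \<otimes>\<^bsub>G\<^esub> h) = ((a g + a h) + (b g + b h)) mod int q"
    by (simp add: add1_def H1_hom[OF a] H1_hom[OF b] mod_add_eq)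
  also have "\<dots> = ((a g + b g) + (a h + b h)) mod int q"
    by (simp add: algebra_simps)
  also have "\<dots> = (add1 q a b g + add1 q a b h) mod int q"
    by (simp add: add1_def mod_add_eq)
  finally show "add1 q a b (g \<otimes>\<^bsub>G\<^esub> h) = (add1 q a b g + add1 q a b h) mod int q" .
qed

lemma cupc_Z2:
  assumes q: "q > 0" and grpG: "group G" and ts: "topspace T = carrier G"
    and a: "a \<in> H1 G T q" and b: "b \<in> H1 G T q"
  shows "cupc G q a b \<in> Z2 G T q"
proof (rule Z2I)
  have ca: "continuous_map (prod_topology T T) (ZqT q) (a \<circ> fst)"
    by (rule continuous_map_compose[OF continuous_map_fst H1_cont[OF a]])
  have cb: "continuous_map (prod_topology T T) (ZqT q) (b \<circ> snd)"
    by (rule continuous_map_compose[OF continuous_map_snd H1_cont[OF b]])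
  show "continuous_map (prod_topology T T) (ZqT q) (cupc G q a b)"
    by (rule cont_Zq_comb[OF ca cb, where \<phi>="\<lambda>x y. (x * y) mod int q"])
       (auto simp: cupc_def ts intro: mod_in_Zq[OF q])
  show "cupc G q a b x = 0" if "x \<notin> carrier G \<times> carrier G" for x
    using that by (cases x) (auto simp: cupc_def)
  fix g h k assume g: "g \<in> carrier G" and h: "h \<in> carrier G" and k: "k \<in> carrier G"
  have gh: "g \<otimes>\<^bsub>G\<^esub> h \<in> carrier G" and hk: "h \<otimes>\<^bsub>G\<^esub> k \<in> carrier G"
    using g h k grpG by (auto intro: group.is_monoid monoid.m_closed)
  have d1: "int q dvd (a (g \<otimes>\<^bsub>G\<^esub> h) - a g - a h)"
    using dvd_mod_self[of q "a g + a h"] H1_hom[OF a g h] by (simp add: diff_diff_eq)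
  have d2: "int q dvd (b (h \<otimes>\<^bsub>G\<^esub> k) - b h - b k)"
    using dvd_mod_self[of q "b h + b k"] H1_hom[OF b h k] by (simp add: diff_diff_eq)
  have e: "int q dvd (cupc G q a b (x, y) - a x * b y)" if "x \<in> carrier G" "y \<in> carrier G" for x y
    using that dvd_mod_self[of q "a x * b y"] by (simp add: cupc_def)
  have "cupc G q a b (h, k) - cupc G q a b (g \<otimes>\<^bsub>G\<^esub> h, k) + cupc G q a b (g, h \<otimes>\<^bsub>G\<^esub> k) - cupc G q a b (g, h)
    = (cupc G q a b (h, k) - a h * b k) - (cupc G q a b (g \<otimes>\<^bsub>G\<^esub> h, k) - a (g \<otimes>\<^bsub>G\<^esub> h) * b k)
      + (cupc G q a b (g, h \<otimes>\<^bsub>G\<^esub> k) - a g * b (h \<otimes>\<^bsub>G\<^esub> k)) - (cupc G q a b (g, h) - a g * b h)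
      + (- ((a (g \<otimes>\<^bsub>G\<^esub> h) - a g - a h) * b k) + a g * (b (h \<otimes>\<^bsub>G\<^esub> k) - b h - b k))"
    by (simp add: algebra_simps)
  also have "int q dvd \<dots>"
    by (rule dvd_add[OF dvd_diff[OF dvd_add[OF dvd_diff[OF e[OF h k] e[OF gh k]] e[OF g hk]] e[OF g h]]
          dvd_add[OF dvd_neg[OF dvd_mult2[OF d1]] dvd_mult[OF d2]]])
  finally show "int q dvd (cupc G q a b (h, k) - cupc G q a b (g \<otimes>\<^bsub>G\<^esub> h, k) + cupc G q a b (g, h \<otimes>\<^bsub>G\<^esub> k) - cupc G q a b (g, h))" .
qed

lemma cup_carrier:
  assumes q: "q > 0" and grpG: "group G" and ts: "topspace T = carrier G"
    and a: "a \<in> H1 G T q" and b: "b \<in> H1 G T q"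
  shows "cup G T q a b \<in> carrier (H2 G T q)"
  using cupc_Z2[OF assms] by (simp add: cup_cupc H2_carrier)

lemma cup_bilin_left:
  assumes q: "q > 0" and grpG: "group G" and ts: "topspace T = carrier G"
    and a: "a \<in> H1 G T q" and a': "a' \<in> H1 G T q" and b: "b \<in> H1 G T q"
  shows "cup G T q (add1 q a a') b = cup G T q a b \<otimes>\<^bsub>H2 G T q\<^esub> cup G T q a' b"
proof -
  have "add2 q (cupc G q a b) (cupc G q a' b) = cupc G q (add1 q a a') b"
    by (rule ext) (auto simp: add2_def cupc_def add1_def mod_simps distrib_right)
  then show ?thesis
    by (simp add: cup_cupc H2_mult[OF q cupc_Z2[OF q grpG ts a b] cupc_Z2[OF q grpG ts a' b]])
qed

lemma cup_bilin_right:
  assumes q: "q > 0" and grpG: "group G" and ts: "topspace T = carrier G"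
    and a: "a \<in> H1 G T q" and b: "b \<in> H1 G T q" and b': "b' \<in> H1 G T q"
  shows "cup G T q a (add1 q b b') = cup G T q a b \<otimes>\<^bsub>H2 G T q\<^esub> cup G T q a b'"
proof -
  have "add2 q (cupc G q a b) (cupc G q a b') = cupc G q a (add1 q b b')"
    by (rule ext) (auto simp: add2_def cupc_def add1_def mod_simps distrib_left)
  then show ?thesis
    by (simp add: cup_cupc H2_mult[OF q cupc_Z2[OF q grpG ts a b] cupc_Z2[OF q grpG ts a b']])
qed

definition pb :: "('a, 'b) monoid_scheme \<Rightarrow> 'a topology \<Rightarrow> nat \<Rightarrow> ('a set \<times> 'a set \<Rightarrow> int) \<Rightarrow> ('a \<times> 'a \<Rightarrow> int)" where
  "pb G T q f = (\<lambda>(g, h). if g \<in> carrier G \<and> h \<in> carrier G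
      then f (Gsub2 G T q #>\<^bsub>G\<^esub> g, Gsub2 G T q #>\<^bsub>G\<^esub> h) else 0)"

lemma infl2_pb: "infl2 G T q A = cls2 G T q (pb G T q (SOME f. f \<in> A))"
  by (simp add: infl2_def pb_def)

context
  fixes G :: "('a, 'b) monoid_scheme" and T :: "'a topology" and q :: nat
  assumes TG: "topological_group G T" and q: "q > 0"
begin

interpretation grp: group G by (rule TG_group[OF TG])

abbreviation "QQ \<equiv> Gquot2 G T q"
abbreviation "TQ \<equiv> Tquot2 G T q"
abbreviation "NN \<equiv> Gsub2 G T q"

lemma pi2_cont: "continuous_map (prod_topology T T) (prod_topology TQ TQ)
     (\<lambda>x. (NN #>\<^bsub>G\<^esub> fst x, NN #>\<^bsub>G\<^esub> snd x))"
  using continuous_map_compose[OF continuous_map_fst pi_cont[OF TG q]]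
    continuous_map_compose[OF continuous_map_snd pi_cont[OF TG q]]
  by (intro continuous_map_pairedI) (auto simp: o_def)

lemma pb_Z2: assumes f: "f \<in> Z2 QQ TQ q" shows "pb G T q f \<in> Z2 G T q"
proof (rule Z2I)
  show "continuous_map (prod_topology T T) (ZqT q) (pb G T q f)"
    by (rule continuous_map_eq[OF continuous_map_compose[OF pi2_cont Z2_cont[OF f]]])
       (auto simp: pb_def TG_ts[OF TG])
  show "pb G T q f x = 0" if "x \<notin> carrier G \<times> carrier G" for x
    using that by (cases x) (auto simp: pb_def)
  fix g h k assume g: "g \<in> carrier G" and h: "h \<in> carrier G" and k: "k \<in> carrier G"
  have "int q dvd (f (NN #>\<^bsub>G\<^esub> h, NN #>\<^bsub>G\<^esub> k) - f ((NN #>\<^bsub>G\<^esub> g) \<otimes>\<^bsub>QQ\<^esub> (NN #>\<^bsub>G\<^esub> h), NN #>\<^bsub>G\<^esub> k)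
     + f (NN #>\<^bsub>G\<^esub> g, (NN #>\<^bsub>G\<^esub> h) \<otimes>\<^bsub>QQ\<^esub> (NN #>\<^bsub>G\<^esub> k)) - f (NN #>\<^bsub>G\<^esub> g, NN #>\<^bsub>G\<^esub> h))"
    by (rule Z2_cocycle[OF f pi_carrier[OF TG q g] pi_carrier[OF TG q h] pi_carrier[OF TG q k]])
  then show "int q dvd (pb G T q f (h, k) - pb G T q f (g \<otimes>\<^bsub>G\<^esub> h, k) + pb G T q f (g, h \<otimes>\<^bsub>G\<^esub> k) - pb G T q f (g, h))"
    using g h k by (simp add: pb_def pi_mult[OF TG q])
qed

lemma pb_cohom: assumes "cohom2 QQ TQ q f f'" shows "cohom2 G T q (pb G T q f) (pb G T q f')"
proof -
  from assms obtain c where c: "c \<in> C1 QQ TQ q"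
    and h: "\<And>x y. x \<in> carrier QQ \<Longrightarrow> y \<in> carrier QQ \<Longrightarrow>
       int q dvd (f (x, y) - f' (x, y) - (c y - c (x \<otimes>\<^bsub>QQ\<^esub> y) + c x))"
    unfolding cohom2_iff by blast
  let ?c = "iota G T q c"
  have cc: "?c \<in> C1 G T q"
    unfolding C1_def
  proof (intro CollectI conjI allI impI)
    show "continuous_map T (ZqT q) ?c"
      by (rule continuous_map_eq[OF continuous_map_compose[OF pi_cont[OF TG q] C1_cont[OF c]]])
         (simp add: iota_def TG_ts[OF TG])
  qed (simp add: iota_def)
  show ?thesis unfolding cohom2_iff
  proof (intro bexI[OF _ cc] ballI)
    fix x y assume x: "x \<in> carrier G" and y: "y \<in> carrier G"
    show "int q dvd (pb G T q f (x, y) - pb G T q f' (x, y) - (?c y - ?c (x \<otimes>\<^bsub>G\<^esub> y) + ?c x))"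
      using h[OF pi_carrier[OF TG q x] pi_carrier[OF TG q y]] x y
      by (simp add: pb_def iota_def pi_mult[OF TG q])
  qed
qed

lemma pb_add: "pb G T q (add2 q f f') = add2 q (pb G T q f) (pb G T q f')"
  by (rule ext) (auto simp: pb_def add2_def)

lemma infl_cls: assumes f: "f \<in> Z2 QQ TQ q" shows "infl2 G T q (cls2 QQ TQ q f) = cls2 G T q (pb G T q f)"
proof -
  let ?a = "SOME a. a \<in> cls2 QQ TQ q f"
  have a: "?a \<in> cls2 QQ TQ q f"
    using someI[of "\<lambda>a. a \<in> cls2 QQ TQ q f" f] cls2_self[OF q f] by blast
  then have "cohom2 QQ TQ q f ?a" by (simp add: cls2_def)
  then have "cohom2 G T q (pb G T q ?a) (pb G T q f)"
    using cohom2_sym[OF q pb_cohom] by blast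
  then show ?thesis by (simp add: infl2_pb cls2_eq[OF q])
qed

lemma infl_hom: "infl2 G T q \<in> hom (H2 QQ TQ q) (H2 G T q)"
  unfolding hom_def
proof (intro CollectI conjI ballI)
  show "infl2 G T q \<in> carrier (H2 QQ TQ q) \<rightarrow> carrier (H2 G T q)"
    by (auto simp: H2_carrier infl_cls pb_Z2)
  fix A B assume "A \<in> carrier (H2 QQ TQ q)" "B \<in> carrier (H2 QQ TQ q)"
  then obtain f g where f: "f \<in> Z2 QQ TQ q" "A = cls2 QQ TQ q f" and g: "g \<in> Z2 QQ TQ q" "B = cls2 QQ TQ q g"
    by (auto simp: H2_carrier)
  show "infl2 G T q (A \<otimes>\<^bsub>H2 QQ TQ q\<^esub> B) = infl2 G T q A \<otimes>\<^bsub>H2 G T q\<^esub> infl2 G T q B"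
    using f g by (simp add: H2_mult[OF q] Z2_add[OF q] infl_cls pb_Z2 pb_add)
qed

lemma infl_cup:
  assumes a: "a \<in> H1 QQ TQ q" and b: "b \<in> H1 QQ TQ q"
  shows "infl2 G T q (cup QQ TQ q a b) = cup G T q (iota G T q a) (iota G T q b)"
proof -
  have "pb G T q (cupc QQ q a b) = cupc G q (iota G T q a) (iota G T q b)"
    by (rule ext) (auto simp: pb_def cupc_def iota_def pi_carrier[OF TG q])
  then show ?thesis
    by (simp add: cup_cupc infl_cls cupc_Z2[OF q Q_group[OF TG q] topspace_TQ[OF TG q] a b])
qed

lemma iota_add1: "iota G T q (add1 q a b) = add1 q (iota G T q a) (iota G T q b)"
  by (rule ext) (simp add: iota_def add1_def)

end

definition fp :: "('c, 'd) monoid_scheme \<Rightarrow> ('z \<Rightarrow> 'c) \<Rightarrow> ('z \<Rightarrow> int) \<Rightarrow> 'z set \<Rightarrow> 'c" where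
  "fp H e F A = finprod H (\<lambda>z. e z [^]\<^bsub>H\<^esub> F z) A"

context comm_group begin

lemma fp_fun: fixes F :: "'z \<Rightarrow> int" assumes "e \<in> A \<rightarrow> carrier G" shows "(\<lambda>z. e z [^] F z) \<in> A \<rightarrow> carrier G"
proof (rule Pi_I)
  fix x assume "x \<in> A"
  then have "e x \<in> carrier G" using assms by blast
  then show "e x [^] F x \<in> carrier G" by simp
qed

lemma fp_closed: "e \<in> A \<rightarrow> carrier G \<Longrightarrow> fp G e F A \<in> carrier G"
  unfolding fp_def by (rule finprod_closed[OF fp_fun])

lemma fp_extend:
  assumes "finite B" "{z. F z \<noteq> 0} \<subseteq> A" "A \<subseteq> B" "e \<in> B \<rightarrow> carrier G"
  shows "fp G e F A = fp G e F B"
  unfolding fp_def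
proof (rule finprod_mono_neutral_cong_left)
  fix i assume "i \<in> B - A"
  then have "F i = 0" using assms(2) by blast
  then show "e i [^] F i = \<one>" by simp
qed (use assms fp_fun[OF assms(4)] in auto)

lemma fp_add: assumes "e \<in> A \<rightarrow> carrier G"
  shows "fp G e (\<lambda>z. F z + F' z) A = fp G e F A \<otimes> fp G e F' A"
proof -
  have "fp G e (\<lambda>z. F z + F' z) A = finprod G (\<lambda>z. e z [^] F z \<otimes> e z [^] F' z) A"
    unfolding fp_def
  proof (rule finprod_cong')
    fix i assume "i \<in> A"
    then have "e i \<in> carrier G" using assms by blast
    then show "e i [^] (F i + F' i) = e i [^] F i \<otimes> e i [^] F' i" by (simp add: int_pow_mult)
  qed (use assms fp_fun[OF assms] in auto)
  also have "\<dots> = fp G e F A \<otimes> fp G e F' A"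
    unfolding fp_def using fp_fun[OF assms] by (intro finprod_multf) auto
  finally show ?thesis .
qed

lemma fp_zero: "fp G e (\<lambda>_. 0) A = \<one>"
  by (simp add: fp_def)

lemma fp_neg: assumes e: "e \<in> A \<rightarrow> carrier G"
  shows "fp G e (\<lambda>z. - F z) A = inv (fp G e F A)"
proof -
  have "fp G e (\<lambda>z. - F z) A \<otimes> fp G e F A = fp G e (\<lambda>z. - F z + F z) A"
    by (rule fp_add[OF e, symmetric])
  also have "\<dots> = \<one>" by (simp add: fp_zero)
  finally show ?thesis
    by (intro inv_equality[symmetric] fp_closed[OF e])
qed

lemma fp_sub: assumes e: "e \<in> A \<rightarrow> carrier G"
  shows "fp G e (\<lambda>z. F z - F' z) A = fp G e F A \<otimes> inv (fp G e F' A)"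
  using fp_add[OF e, of F "\<lambda>z. - F' z"] fp_neg[OF e, of F'] by simp

lemma fp_delta: assumes e: "e \<in> A \<rightarrow> carrier G" and z: "z \<in> A" and A: "finite A"
  shows "fp G e (delta z) A = e z"
proof -
  have "fp G e (delta z) A = fp G e (delta z) {z}"
    by (rule fp_extend[symmetric]) (use A z e in \<open>auto simp: delta_def\<close>)
  also have "\<dots> = e z"
  proof -
    have ez: "e z \<in> carrier G" using e z by blast
    have "fp G e (delta z) {z} = e z [^] (1::int) \<otimes> finprod G (\<lambda>y. e y [^] delta z y) {}"
      unfolding fp_def using ez by (subst finprod_insert) (auto simp: delta_def)
    then show ?thesis using ez by simp
  qed
  finally show ?thesis .
qed

lemma cancel4: "a \<in> carrier G \<Longrightarrow> b \<in> carrier G \<Longrightarrow> (a \<otimes> b) \<otimes> inv a \<otimes> inv b = \<one>"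
proof -
  assume a: "a \<in> carrier G" and b: "b \<in> carrier G"
  have "inv a \<otimes> inv b = inv (a \<otimes> b)" using a b by (simp add: inv_mult_group m_comm)
  have "(a \<otimes> b) \<otimes> inv a \<otimes> inv b = (a \<otimes> b) \<otimes> (inv a \<otimes> inv b)" using a b by (simp add: m_assoc)
  also have "\<dots> = (a \<otimes> b) \<otimes> inv (a \<otimes> b)" using \<open>inv a \<otimes> inv b = inv (a \<otimes> b)\<close> by simp
  also have "\<dots> = \<one>" using a b by simp
  finally show ?thesis .
qed

end

lemma hom_finprod:
  assumes H: "comm_group H" and K: "comm_group K" and h: "h \<in> hom H K"
    and f: "f \<in> A \<rightarrow> carrier H"
  shows "h (finprod H f A) = finprod K (h \<circ> f) A"
proof -
  interpret H: comm_group H by (rule H)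
  interpret K: comm_group K by (rule K)
  interpret hk: group_hom H K h
    by (simp add: group_hom_def group_hom_axioms_def h H.is_group K.is_group)
  show ?thesis using f
  proof (induction A rule: infinite_finite_induct)
    case (infinite A) then show ?case by simp
  next
    case empty then show ?case by simp
  next
    case (insert x F)
    then have fx: "f x \<in> carrier H" and fF: "f \<in> F \<rightarrow> carrier H" by auto
    have hf: "h \<circ> f \<in> insert x F \<rightarrow> carrier K"
    proof (rule Pi_I)
      fix y assume "y \<in> insert x F"
      then have "f y \<in> carrier H" using insert.prems by blast
      then show "(h \<circ> f) y \<in> carrier K" by simp
    qed
    have "finprod K (h \<circ> f) (insert x F) = (h \<circ> f) x \<otimes>\<^bsub>K\<^esub> finprod K (h \<circ> f) F"
      by (rule K.finprod_insert) (use insert.hyps hf in auto)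
    moreover have "finprod H f (insert x F) = f x \<otimes>\<^bsub>H\<^esub> finprod H f F"
      by (rule H.finprod_insert) (use insert.hyps fF fx in auto)
    ultimately show ?case using insert.IH[OF fF] fx fF by (simp add: hk.hom_mult o_def)
  qed
qed

definition jinv :: "('a, 'b) monoid_scheme \<Rightarrow> 'a topology \<Rightarrow> nat \<Rightarrow> ('a \<Rightarrow> int) \<Rightarrow> ('a set \<Rightarrow> int)" where
  "jinv G T q = inv_into (H1 (Gquot2 G T q) (Tquot2 G T q) q) (iota G T q)"

definition ee :: "('a, 'b) monoid_scheme \<Rightarrow> 'a topology \<Rightarrow> nat \<Rightarrow> ('a \<Rightarrow> int) \<times> ('a \<Rightarrow> int) \<Rightarrow> ('a set \<times> 'a set \<Rightarrow> int) set" where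
  "ee G T q z = cup (Gquot2 G T q) (Tquot2 G T q) q (jinv G T q (fst z)) (jinv G T q (snd z))"

definition Phi :: "('a, 'b) monoid_scheme \<Rightarrow> 'a topology \<Rightarrow> nat \<Rightarrow> (('a \<Rightarrow> int) \<times> ('a \<Rightarrow> int) \<Rightarrow> int) \<Rightarrow> ('a set \<times> 'a set \<Rightarrow> int) set" where
  "Phi G T q F = fp (H2 (Gquot2 G T q) (Tquot2 G T q) q) (ee G T q) F {z. F z \<noteq> 0}"

context
  fixes G :: "('a, 'b) monoid_scheme" and T :: "'a topology" and q :: nat
  assumes TG: "topological_group G T" and q: "q > 0"
begin

interpretation grp: group G by (rule TG_group[OF TG])
interpretation HQ: comm_group "H2 (Gquot2 G T q) (Tquot2 G T q) q" by (rule H2_comm_group[OF q])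
interpretation HG: comm_group "H2 G T q" by (rule H2_comm_group[OF q])

lemma j_H1: "a \<in> H1 G T q \<Longrightarrow> jinv G T q a \<in> H1 (Gquot2 G T q) (Tquot2 G T q) q"
  unfolding jinv_def using iota_bij[OF TG q] by (intro inv_into_into) (simp add: bij_betw_def)

lemma iota_j: "a \<in> H1 G T q \<Longrightarrow> iota G T q (jinv G T q a) = a"
  unfolding jinv_def
  by (rule f_inv_into_f[where f="iota G T q" and A="H1 (Gquot2 G T q) (Tquot2 G T q) q"])
     (use iota_bij[OF TG q] in \<open>auto simp: bij_betw_def\<close>)

lemma j_iota: "\<psi> \<in> H1 (Gquot2 G T q) (Tquot2 G T q) q \<Longrightarrow> jinv G T q (iota G T q \<psi>) = \<psi>"
  unfolding jinv_def using iota_inj[OF TG q] by (rule inv_into_f_f)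

lemma cupQ_carrier: "a \<in> H1 (Gquot2 G T q) (Tquot2 G T q) q \<Longrightarrow> b \<in> H1 (Gquot2 G T q) (Tquot2 G T q) q \<Longrightarrow>
    cup (Gquot2 G T q) (Tquot2 G T q) q a b \<in> carrier (H2 (Gquot2 G T q) (Tquot2 G T q) q)"
  by (rule cup_carrier[OF q Q_group[OF TG q] topspace_TQ[OF TG q]])

lemma ee_carrier: "ee G T q \<in> (H1 G T q \<times> H1 G T q) \<rightarrow> carrier (H2 (Gquot2 G T q) (Tquot2 G T q) q)"
  unfolding ee_def by (auto intro!: cupQ_carrier j_H1)

lemma ee_carrier_sub: "A \<subseteq> H1 G T q \<times> H1 G T q \<Longrightarrow> ee G T q \<in> A \<rightarrow> carrier (H2 (Gquot2 G T q) (Tquot2 G T q) q)"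
  using ee_carrier by blast

lemma Phi_extend: assumes fin: "finite A" and s: "{z. F z \<noteq> 0} \<subseteq> A" and D: "A \<subseteq> H1 G T q \<times> H1 G T q"
  shows "Phi G T q F = fp (H2 (Gquot2 G T q) (Tquot2 G T q) q) (ee G T q) F A"
  unfolding Phi_def by (rule HQ.fp_extend[OF fin order.refl s ee_carrier_sub[OF D]])

lemma Phi_add:
  assumes F: "finite {z. F z \<noteq> 0}" "{z. F z \<noteq> 0} \<subseteq> H1 G T q \<times> H1 G T q"
    and F': "finite {z. F' z \<noteq> 0}" "{z. F' z \<noteq> 0} \<subseteq> H1 G T q \<times> H1 G T q"
  shows "Phi G T q (\<lambda>z. F z + F' z) = Phi G T q F \<otimes>\<^bsub>H2 (Gquot2 G T q) (Tquot2 G T q) q\<^esub> Phi G T q F'"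
    and "finite {z. F z + F' z \<noteq> 0}" "{z. F z + F' z \<noteq> 0} \<subseteq> H1 G T q \<times> H1 G T q"
proof -
  let ?A = "{z. F z \<noteq> 0} \<union> {z. F' z \<noteq> 0}"
  have fin: "finite ?A" using F F' by simp
  have sub: "?A \<subseteq> H1 G T q \<times> H1 G T q" using F F' by simp
  have s: "{z. F z + F' z \<noteq> 0} \<subseteq> ?A" by auto
  show "finite {z. F z + F' z \<noteq> 0}" using finite_subset[OF s fin] .
  show "{z. F z + F' z \<noteq> 0} \<subseteq> H1 G T q \<times> H1 G T q" using s sub by blast
  have "Phi G T q (\<lambda>z. F z + F' z) = fp (H2 (Gquot2 G T q) (Tquot2 G T q) q) (ee G T q) (\<lambda>z. F z + F' z) ?A"
    by (rule Phi_extend[OF fin s sub])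
  also have "\<dots> = fp (H2 (Gquot2 G T q) (Tquot2 G T q) q) (ee G T q) F ?A \<otimes>\<^bsub>H2 (Gquot2 G T q) (Tquot2 G T q) q\<^esub>
      fp (H2 (Gquot2 G T q) (Tquot2 G T q) q) (ee G T q) F' ?A"
    by (rule HQ.fp_add[OF ee_carrier_sub[OF sub]])
  also have "\<dots> = Phi G T q F \<otimes>\<^bsub>H2 (Gquot2 G T q) (Tquot2 G T q) q\<^esub> Phi G T q F'"
    using Phi_extend[OF fin _ sub, of F] Phi_extend[OF fin _ sub, of F'] by auto
  finally show "Phi G T q (\<lambda>z. F z + F' z) = Phi G T q F \<otimes>\<^bsub>H2 (Gquot2 G T q) (Tquot2 G T q) q\<^esub> Phi G T q F'" .
qed

lemma Phi_neg:
  assumes F: "{z. F z \<noteq> 0} \<subseteq> H1 G T q \<times> H1 G T q"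
  shows "Phi G T q (\<lambda>z. - F z) = inv\<^bsub>H2 (Gquot2 G T q) (Tquot2 G T q) q\<^esub> Phi G T q F"
proof -
  have e: "{z. - F z \<noteq> 0} = {z. F z \<noteq> 0}" by simp
  show ?thesis unfolding Phi_def e by (rule HQ.fp_neg[OF ee_carrier_sub[OF F]])
qed

lemma Phi_carrier: "{z. F z \<noteq> 0} \<subseteq> H1 G T q \<times> H1 G T q \<Longrightarrow>
   Phi G T q F \<in> carrier (H2 (Gquot2 G T q) (Tquot2 G T q) q)"
  unfolding Phi_def by (rule HQ.fp_closed[OF ee_carrier_sub])

lemma supp_delta: "{y. delta z y \<noteq> 0} = {z}"
  by (auto simp: delta_def)

lemma Phi_delta: "z \<in> H1 G T q \<times> H1 G T q \<Longrightarrow> Phi G T q (delta z) = ee G T q z"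
  unfolding Phi_def supp_delta
  by (rule HQ.fp_delta[OF ee_carrier_sub]) auto

lemma Phi_zero: "Phi G T q (\<lambda>_. 0) = \<one>\<^bsub>H2 (Gquot2 G T q) (Tquot2 G T q) q\<^esub>"
  unfolding Phi_def by (simp add: fp_def)

lemma L1:
  assumes "x \<in> generate (H2 (Gquot2 G T q) (Tquot2 G T q) q)
     {c. \<exists>\<psi>\<in>H1 (Gquot2 G T q) (Tquot2 G T q) q. \<exists>\<psi>'\<in>H1 (Gquot2 G T q) (Tquot2 G T q) q.
          c = cup (Gquot2 G T q) (Tquot2 G T q) q \<psi> \<psi>'}"
  shows "\<exists>F. finite {z. F z \<noteq> 0} \<and> {z. F z \<noteq> 0} \<subseteq> H1 G T q \<times> H1 G T q \<and> Phi G T q F = x"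
  using assms
proof (induction rule: generate.induct)
  case one
  show ?case by (rule exI[of _ "\<lambda>_. 0"]) (simp add: Phi_zero)
next
  case (incl h)
  then obtain \<psi> \<psi>' where p: "\<psi> \<in> H1 (Gquot2 G T q) (Tquot2 G T q) q" "\<psi>' \<in> H1 (Gquot2 G T q) (Tquot2 G T q) q"
    and h: "h = cup (Gquot2 G T q) (Tquot2 G T q) q \<psi> \<psi>'" by blast
  let ?z = "(iota G T q \<psi>, iota G T q \<psi>')"
  have z: "?z \<in> H1 G T q \<times> H1 G T q" using iota_H1[OF TG q] p by simp
  have "Phi G T q (delta ?z) = h"
    using Phi_delta[OF z] p h by (simp add: ee_def j_iota)
  then show ?case using z by (intro exI[of _ "delta ?z"]) (simp add: supp_delta)
next
  case (inv h)
  then obtain \<psi> \<psi>' where p: "\<psi> \<in> H1 (Gquot2 G T q) (Tquot2 G T q) q" "\<psi>' \<in> H1 (Gquot2 G T q) (Tquot2 G T q) q"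
    and h: "h = cup (Gquot2 G T q) (Tquot2 G T q) q \<psi> \<psi>'" by blast
  let ?z = "(iota G T q \<psi>, iota G T q \<psi>')"
  have z: "?z \<in> H1 G T q \<times> H1 G T q" using iota_H1[OF TG q] p by simp
  have "Phi G T q (delta ?z) = h"
    using Phi_delta[OF z] p h by (simp add: ee_def j_iota)
  moreover have "Phi G T q (\<lambda>y. - delta ?z y) = inv\<^bsub>H2 (Gquot2 G T q) (Tquot2 G T q) q\<^esub> Phi G T q (delta ?z)"
    by (rule Phi_neg) (use z in \<open>simp add: supp_delta\<close>)
  moreover have "{y. - delta ?z y \<noteq> 0} = {?z}" using supp_delta[of ?z] by simp
  ultimately show ?case using z by (intro exI[of _ "\<lambda>y. - delta ?z y"]) simp
next
  case (eng h1 h2)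
  then obtain F1 F2 where F1: "finite {z. F1 z \<noteq> 0}" "{z. F1 z \<noteq> 0} \<subseteq> H1 G T q \<times> H1 G T q" "Phi G T q F1 = h1"
    and F2: "finite {z. F2 z \<noteq> 0}" "{z. F2 z \<noteq> 0} \<subseteq> H1 G T q \<times> H1 G T q" "Phi G T q F2 = h2"
    by blast
  show ?case
    using Phi_add[OF F1(1,2) F2(1,2)] F1(3) F2(3) by (intro exI[of _ "\<lambda>z. F1 z + F2 z"]) simp
qed

end

context
  fixes G :: "('a, 'b) monoid_scheme" and T :: "'a topology" and q :: nat
  assumes TG: "topological_group G T" and q: "q > 0"
begin

interpretation grp: group G by (rule TG_group[OF TG])
interpretation HQ: comm_group "H2 (Gquot2 G T q) (Tquot2 G T q) q" by (rule H2_comm_group[OF q])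
interpretation HG: comm_group "H2 G T q" by (rule H2_comm_group[OF q])

lemma SQ_sub: "{c. \<exists>\<psi>\<in>H1 (Gquot2 G T q) (Tquot2 G T q) q. \<exists>\<psi>'\<in>H1 (Gquot2 G T q) (Tquot2 G T q) q.
          c = cup (Gquot2 G T q) (Tquot2 G T q) q \<psi> \<psi>' \<and> infl2 G T q c = \<one>\<^bsub>H2 G T q\<^esub>}
    \<subseteq> carrier (H2 (Gquot2 G T q) (Tquot2 G T q) q)"
  using cupQ_carrier[OF TG q] by blast

lemma j_add1: "a \<in> H1 G T q \<Longrightarrow> a' \<in> H1 G T q \<Longrightarrow> jinv G T q (add1 q a a') = add1 q (jinv G T q a) (jinv G T q a')"
proof -
  assume a: "a \<in> H1 G T q" and a': "a' \<in> H1 G T q"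
  have m: "add1 q (jinv G T q a) (jinv G T q a') \<in> H1 (Gquot2 G T q) (Tquot2 G T q) q"
    by (rule H1_add1[OF q j_H1[OF TG q a] j_H1[OF TG q a']])
  have "iota G T q (add1 q (jinv G T q a) (jinv G T q a')) = add1 q a a'"
    by (simp add: iota_add1[OF TG q] iota_j[OF TG q a] iota_j[OF TG q a'])
  then show ?thesis using j_iota[OF TG q m] by simp
qed

lemma bilin_Phi:
  assumes z1: "z1 \<in> H1 G T q \<times> H1 G T q" and z2: "z2 \<in> H1 G T q \<times> H1 G T q" and z3: "z3 \<in> H1 G T q \<times> H1 G T q"
    and e: "ee G T q z1 = ee G T q z2 \<otimes>\<^bsub>H2 (Gquot2 G T q) (Tquot2 G T q) q\<^esub> ee G T q z3"
  shows "Phi G T q (\<lambda>z. delta z1 z - delta z2 z - delta z3 z) = \<one>\<^bsub>H2 (Gquot2 G T q) (Tquot2 G T q) q\<^esub>"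
    and "finite {z. delta z1 z - delta z2 z - delta z3 z \<noteq> 0}"
    and "{z. delta z1 z - delta z2 z - delta z3 z \<noteq> 0} \<subseteq> H1 G T q \<times> H1 G T q"
proof -
  let ?A = "{z1, z2, z3}"
  have s: "{z. delta z1 z - delta z2 z - delta z3 z \<noteq> 0} \<subseteq> ?A" by (auto simp: delta_def)
  have fin: "finite ?A" by simp
  have D: "?A \<subseteq> H1 G T q \<times> H1 G T q" using z1 z2 z3 by simp
  show "finite {z. delta z1 z - delta z2 z - delta z3 z \<noteq> 0}" using finite_subset[OF s fin] .
  show "{z. delta z1 z - delta z2 z - delta z3 z \<noteq> 0} \<subseteq> H1 G T q \<times> H1 G T q" using s D by blast
  note ec = ee_carrier_sub[OF TG q D]
  let ?fp = "fp (H2 (Gquot2 G T q) (Tquot2 G T q) q) (ee G T q)"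
  have d: "?fp (delta z) ?A = ee G T q z" if "z \<in> ?A" for z
    by (rule HQ.fp_delta[OF ec that fin])
  have c1: "ee G T q z2 \<in> carrier (H2 (Gquot2 G T q) (Tquot2 G T q) q)"
    and c2: "ee G T q z3 \<in> carrier (H2 (Gquot2 G T q) (Tquot2 G T q) q)" using ec by auto
  have "Phi G T q (\<lambda>z. delta z1 z - delta z2 z - delta z3 z) = ?fp (\<lambda>z. delta z1 z - delta z2 z - delta z3 z) ?A"
    by (rule Phi_extend[OF TG q fin s D])
  also have "\<dots> = ?fp (\<lambda>z. delta z1 z - delta z2 z) ?A \<otimes>\<^bsub>H2 (Gquot2 G T q) (Tquot2 G T q) q\<^esub> inv\<^bsub>H2 (Gquot2 G T q) (Tquot2 G T q) q\<^esub> (?fp (delta z3) ?A)"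
    using HQ.fp_sub[OF ec, of "\<lambda>z. delta z1 z - delta z2 z" "delta z3"] by simp
  also have "\<dots> = (ee G T q z1 \<otimes>\<^bsub>H2 (Gquot2 G T q) (Tquot2 G T q) q\<^esub> inv\<^bsub>H2 (Gquot2 G T q) (Tquot2 G T q) q\<^esub> ee G T q z2)
       \<otimes>\<^bsub>H2 (Gquot2 G T q) (Tquot2 G T q) q\<^esub> inv\<^bsub>H2 (Gquot2 G T q) (Tquot2 G T q) q\<^esub> ee G T q z3"
    using HQ.fp_sub[OF ec, of "delta z1" "delta z2"] d by simp
  also have "\<dots> = \<one>\<^bsub>H2 (Gquot2 G T q) (Tquot2 G T q) q\<^esub>"
    unfolding e by (rule HQ.cancel4[OF c1 c2])
  finally show "Phi G T q (\<lambda>z. delta z1 z - delta z2 z - delta z3 z) = \<one>\<^bsub>H2 (Gquot2 G T q) (Tquot2 G T q) q\<^esub>" .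
qed

lemma L2:
  assumes "F \<in> zspan (bilin_rels G T q \<union> C2_gens G T q)"
  shows "finite {z. F z \<noteq> 0} \<and> {z. F z \<noteq> 0} \<subseteq> H1 G T q \<times> H1 G T q \<and>
    Phi G T q F \<in> generate (H2 (Gquot2 G T q) (Tquot2 G T q) q)
           {c. \<exists>\<psi>\<in>H1 (Gquot2 G T q) (Tquot2 G T q) q. \<exists>\<psi>'\<in>H1 (Gquot2 G T q) (Tquot2 G T q) q.
                 c = cup (Gquot2 G T q) (Tquot2 G T q) q \<psi> \<psi>'
               \<and> infl2 G T q c = \<one>\<^bsub>H2 G T q\<^esub>}"
  using assms
proof (induction rule: zspan.induct)
  case zero
  show ?case by (simp add: Phi_zero[OF TG q] generate.one)
next
  case (gen s)
  show ?case
  proof (cases "s \<in> C2_gens G T q")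
    case True
    then obtain a b where ab: "a \<in> H1 G T q" "b \<in> H1 G T q" "cup G T q a b = \<one>\<^bsub>H2 G T q\<^esub>"
      and s: "s = delta (a, b)" unfolding C2_gens_def by blast
    have z: "(a, b) \<in> H1 G T q \<times> H1 G T q" using ab by simp
    have "Phi G T q s = cup (Gquot2 G T q) (Tquot2 G T q) q (jinv G T q a) (jinv G T q b)"
      using Phi_delta[OF TG q z] s by (simp add: ee_def)
    moreover have "infl2 G T q (cup (Gquot2 G T q) (Tquot2 G T q) q (jinv G T q a) (jinv G T q b)) = \<one>\<^bsub>H2 G T q\<^esub>"
      using infl_cup[OF TG q j_H1[OF TG q ab(1)] j_H1[OF TG q ab(2)]] ab
      by (simp add: iota_j[OF TG q])
    moreover have sd: "{z. s z \<noteq> 0} = {(a, b)}" using supp_delta[OF TG q, of "(a, b)"] s by simp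
    ultimately have "Phi G T q s \<in> {c. \<exists>\<psi>\<in>H1 (Gquot2 G T q) (Tquot2 G T q) q. \<exists>\<psi>'\<in>H1 (Gquot2 G T q) (Tquot2 G T q) q.
                 c = cup (Gquot2 G T q) (Tquot2 G T q) q \<psi> \<psi>'
               \<and> infl2 G T q c = \<one>\<^bsub>H2 G T q\<^esub>}"
      using j_H1[OF TG q ab(1)] j_H1[OF TG q ab(2)] by auto
    then show ?thesis using z sd by (auto intro: generate.incl)
  next
    case False
    then have "s \<in> bilin_rels G T q" using gen by blast
    then consider
        (l) a a' b where "a \<in> H1 G T q" "a' \<in> H1 G T q" "b \<in> H1 G T q"
          "s = (\<lambda>z. delta (add1 q a a', b) z - delta (a, b) z - delta (a', b) z)"
      | (r) a b b' where "a \<in> H1 G T q" "b \<in> H1 G T q" "b' \<in> H1 G T q"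
          "s = (\<lambda>z. delta (a, add1 q b b') z - delta (a, b) z - delta (a, b') z)"
      unfolding bilin_rels_def by blast
    then show ?thesis
    proof cases
      case l
      have e: "ee G T q (add1 q a a', b) = ee G T q (a, b) \<otimes>\<^bsub>H2 (Gquot2 G T q) (Tquot2 G T q) q\<^esub> ee G T q (a', b)"
        using cup_bilin_left[OF q Q_group[OF TG q] topspace_TQ[OF TG q] j_H1[OF TG q l(1)] j_H1[OF TG q l(2)] j_H1[OF TG q l(3)]]
        by (simp add: ee_def j_add1 l(1) l(2))
      have z1: "(add1 q a a', b) \<in> H1 G T q \<times> H1 G T q" using H1_add1[OF q l(1) l(2)] l(3) by simp
      note B = bilin_Phi[OF z1 _ _ e] 
      show ?thesis using B[of] l by (simp add: generate.one)
    next
      case r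
      have e: "ee G T q (a, add1 q b b') = ee G T q (a, b) \<otimes>\<^bsub>H2 (Gquot2 G T q) (Tquot2 G T q) q\<^esub> ee G T q (a, b')"
        using cup_bilin_right[OF q Q_group[OF TG q] topspace_TQ[OF TG q] j_H1[OF TG q r(1)] j_H1[OF TG q r(2)] j_H1[OF TG q r(3)]]
        by (simp add: ee_def j_add1 r(2) r(3))
      have z1: "(a, add1 q b b') \<in> H1 G T q \<times> H1 G T q" using H1_add1[OF q r(2) r(3)] r(1) by simp
      note B = bilin_Phi[OF z1 _ _ e]
      show ?thesis using B r by (simp add: generate.one)
    qed
  qed
next
  case (neg F)
  have e: "{z. - F z \<noteq> 0} = {z. F z \<noteq> 0}" by simp
  have IH: "finite {z. F z \<noteq> 0}" "{z. F z \<noteq> 0} \<subseteq> H1 G T q \<times> H1 G T q"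
    "Phi G T q F \<in> generate (H2 (Gquot2 G T q) (Tquot2 G T q) q)
           {c. \<exists>\<psi>\<in>H1 (Gquot2 G T q) (Tquot2 G T q) q. \<exists>\<psi>'\<in>H1 (Gquot2 G T q) (Tquot2 G T q) q.
                 c = cup (Gquot2 G T q) (Tquot2 G T q) q \<psi> \<psi>'
               \<and> infl2 G T q c = \<one>\<^bsub>H2 G T q\<^esub>}" using neg.IH by blast+
  have "inv\<^bsub>H2 (Gquot2 G T q) (Tquot2 G T q) q\<^esub> Phi G T q F \<in> generate (H2 (Gquot2 G T q) (Tquot2 G T q) q)
           {c. \<exists>\<psi>\<in>H1 (Gquot2 G T q) (Tquot2 G T q) q. \<exists>\<psi>'\<in>H1 (Gquot2 G T q) (Tquot2 G T q) q.
                 c = cup (Gquot2 G T q) (Tquot2 G T q) q \<psi> \<psi>'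
               \<and> infl2 G T q c = \<one>\<^bsub>H2 G T q\<^esub>}"
    by (rule HQ.generate_m_inv_closed[OF SQ_sub IH(3)])
  then show ?case using IH(1,2) Phi_neg[OF TG q IH(2)] by (simp only: e)
next
  case (add F F')
  show ?case using add Phi_add[OF TG q, of F F'] by (simp add: generate.eng)
qed

end

context
  fixes G :: "('a, 'b) monoid_scheme" and T :: "'a topology" and q :: nat
  assumes TG: "topological_group G T" and q: "q > 0"
begin

interpretation grp: group G by (rule TG_group[OF TG])
interpretation HQ: comm_group "H2 (Gquot2 G T q) (Tquot2 G T q) q" by (rule H2_comm_group[OF q])
interpretation HG: comm_group "H2 G T q" by (rule H2_comm_group[OF q])

lemma infl_Phi:
  assumes D: "{z. F z \<noteq> 0} \<subseteq> H1 G T q \<times> H1 G T q"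
  shows "infl2 G T q (Phi G T q F) = cup_formal G T q F"
proof -
  let ?S = "{z. F z \<noteq> 0}"
  have ff: "(\<lambda>z. ee G T q z [^]\<^bsub>H2 (Gquot2 G T q) (Tquot2 G T q) q\<^esub> F z) \<in> ?S \<rightarrow> carrier (H2 (Gquot2 G T q) (Tquot2 G T q) q)"
    by (rule HQ.fp_fun[OF ee_carrier_sub[OF TG q D]])
  have "infl2 G T q (Phi G T q F) = finprod (H2 G T q) (infl2 G T q \<circ> (\<lambda>z. ee G T q z [^]\<^bsub>H2 (Gquot2 G T q) (Tquot2 G T q) q\<^esub> F z)) ?S"
    unfolding Phi_def fp_def
    by (rule hom_finprod[OF H2_comm_group[OF q] H2_comm_group[OF q] infl_hom[OF TG q] ff])
  also have "\<dots> = finprod (H2 G T q) (\<lambda>(a, b). cup G T q a b [^]\<^bsub>H2 G T q\<^esub> F (a, b)) ?S"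
  proof (rule HG.finprod_cong')
    show "(\<lambda>(a, b). cup G T q a b [^]\<^bsub>H2 G T q\<^esub> F (a, b)) \<in> ?S \<rightarrow> carrier (H2 G T q)"
    proof (rule Pi_I)
      fix z assume "z \<in> ?S"
      then obtain a b where z: "z = (a, b)" "a \<in> H1 G T q" "b \<in> H1 G T q" using D by blast
      have "cup G T q a b \<in> carrier (H2 G T q)"
        by (rule cup_carrier[OF q TG_group[OF TG] TG_ts[OF TG] z(2,3)])
      then show "(case z of (a, b) \<Rightarrow> cup G T q a b [^]\<^bsub>H2 G T q\<^esub> F (a, b)) \<in> carrier (H2 G T q)"
        using z by simp
    qed
  next
    fix z assume "z \<in> ?S"
    then obtain a b where z: "z = (a, b)" "a \<in> H1 G T q" "b \<in> H1 G T q" using D by blast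
    have ec: "ee G T q z \<in> carrier (H2 (Gquot2 G T q) (Tquot2 G T q) q)"
      using ee_carrier[OF TG q] z by blast
    have "infl2 G T q (ee G T q z [^]\<^bsub>H2 (Gquot2 G T q) (Tquot2 G T q) q\<^esub> F z)
        = infl2 G T q (ee G T q z) [^]\<^bsub>H2 G T q\<^esub> F z"
      by (rule hom_int_pow[OF infl_hom[OF TG q] ec HQ.is_group HG.is_group])
    also have "infl2 G T q (ee G T q z) = cup G T q a b"
      using infl_cup[OF TG q j_H1[OF TG q z(2)] j_H1[OF TG q z(3)]] z
      by (simp add: ee_def iota_j[OF TG q])
    finally show "(infl2 G T q \<circ> (\<lambda>z. ee G T q z [^]\<^bsub>H2 (Gquot2 G T q) (Tquot2 G T q) q\<^esub> F z)) z
       = (\<lambda>(a, b). cup G T q a b [^]\<^bsub>H2 G T q\<^esub> F (a, b)) z"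
      using z by simp
  qed simp
  also have "\<dots> = cup_formal G T q F" by (simp add: cup_formal_def)
  finally show ?thesis .
qed

lemma main_eq:
  assumes TQ: "two_quadratic G T q"
  shows "kernel (H2dec (Gquot2 G T q) (Tquot2 G T q) q) (H2 G T q) (infl2 G T q)
       = generate (H2 (Gquot2 G T q) (Tquot2 G T q) q)
           {c. \<exists>\<psi>\<in>H1 (Gquot2 G T q) (Tquot2 G T q) q. \<exists>\<psi>'\<in>H1 (Gquot2 G T q) (Tquot2 G T q) q.
                 c = cup (Gquot2 G T q) (Tquot2 G T q) q \<psi> \<psi>'
               \<and> infl2 G T q c = \<one>\<^bsub>H2 G T q\<^esub>}"
    (is "?L = generate ?HQ ?S")
proof -
  let ?C = "{c. \<exists>\<psi>\<in>H1 (Gquot2 G T q) (Tquot2 G T q) q. \<exists>\<psi>'\<in>H1 (Gquot2 G T q) (Tquot2 G T q) q.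
                 c = cup (Gquot2 G T q) (Tquot2 G T q) q \<psi> \<psi>'}"
  have L: "?L = {x \<in> generate ?HQ ?C. infl2 G T q x = \<one>\<^bsub>H2 G T q\<^esub>}"
    by (simp add: kernel_def H2dec_def)
  have SC: "?S \<subseteq> ?C" by blast
  have Csub: "?C \<subseteq> carrier ?HQ" using cupQ_carrier[OF TG q] by blast
  interpret ih: group_hom ?HQ "H2 G T q" "infl2 G T q"
    by (simp add: group_hom_def group_hom_axioms_def infl_hom[OF TG q] HQ.is_group HG.is_group)
  show ?thesis
  proof
    show "?L \<subseteq> generate ?HQ ?S"
    proof
      fix x assume "x \<in> ?L"
      then have x: "x \<in> generate ?HQ ?C" "infl2 G T q x = \<one>\<^bsub>H2 G T q\<^esub>" using L by auto
      obtain F where F: "finite {z. F z \<noteq> 0}" "{z. F z \<noteq> 0} \<subseteq> H1 G T q \<times> H1 G T q" "Phi G T q F = x"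
        using L1[OF TG q x(1)] by blast
      have "cup_formal G T q F = \<one>\<^bsub>H2 G T q\<^esub>"
        using infl_Phi[OF F(2)] F(3) x(2) by simp
      then have "F \<in> zspan (bilin_rels G T q \<union> C2_gens G T q)"
        using TQ F(1,2) unfolding two_quadratic_def by blast
      then show "x \<in> generate ?HQ ?S" using L2[OF TG q] F(3) by blast
    qed
    show "generate ?HQ ?S \<subseteq> ?L"
    proof -
      have "generate ?HQ ?S \<subseteq> generate ?HQ ?C" by (rule HQ.mono_generate[OF SC])
      moreover have "generate ?HQ ?S \<subseteq> kernel ?HQ (H2 G T q) (infl2 G T q)"
        by (rule HQ.generate_subgroup_incl[OF _ ih.subgroup_kernel])
           (use cupQ_carrier[OF TG q] in \<open>auto simp: kernel_def\<close>)
      ultimately show ?thesis unfolding L by (auto simp: kernel_def)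
    qed
  qed
qed

end

theorem lemma2p2:
  fixes G :: "('a, 'b) monoid_scheme" and T :: "'a topology" and p s q :: nat
  assumes "prime p" and "s \<ge> 1" and "q = p ^ s"
    and "profinite_group G T"
    and "two_quadratic G T q"
  shows "kernel (H2dec (Gquot2 G T q) (Tquot2 G T q) q) (H2 G T q) (infl2 G T q)
       = generate (H2 (Gquot2 G T q) (Tquot2 G T q) q)
           {c. \<exists>\<psi>\<in>H1 (Gquot2 G T q) (Tquot2 G T q) q. \<exists>\<psi>'\<in>H1 (Gquot2 G T q) (Tquot2 G T q) q.
                 c = cup (Gquot2 G T q) (Tquot2 G T q) q \<psi> \<psi>'
               \<and> infl2 G T q c = \<one>\<^bsub>H2 G T q\<^esub>}"
proof -
  have TG: "topological_group G T" using assms(4) by (simp add: profinite_group_def)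
  have "p > 0" using assms(1) prime_gt_0_nat by blast
  then have q: "q > 0" using assms(3) by simp
  show ?thesis by (rule main_eq[OF TG q assms(5)])
qed

end
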